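(* Let $H$ be the face algebra described in the context. The braided Hopf algebra ${}_RH$ decomposes as ${}_RH=\bigoplus_{i\in\mathbb Z_N}H^i$, where each $H^i=\mathrm{span}_{\mathbb C}\{X^i_i(p):p\in\mathbb Z_N\}$ is a Hopf algebra over $\mathbb C1^i$ with unit $1^i=\sum_pX^i_i(p)$ (with the structure $X^i_i(p)X^i_i(q)=\delta_{p,q}X^i_i(p)$, $\underline\Delta(X^i_i(s))=\sum_{w+q=s}X^i_i(w)\otimes X^i_i(q)$, counit $X^i_i(s)\mapsto\delta_{s,0}1^i$, antipode $X^i_i(s)\mapsto X^i_i(-s)$). Moreover, for all $i,j\in\mathbb Z_N$ the linear map $\iota^j_i:H^i\to H^j$, $X^i_i(p)\mapsto X^j_j(p)$, is a Hopf algebra isomorphism.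
   Context: Let $N\ge2$, $\mathbb Z_N=\mathbb Z/N\mathbb Z$, $\omega\in\mathbb C$ a primitive $N$th root of unity. $H$ is the $\mathbb C$-vector space with basis $\{X^i_j(s):i,j,s\in\mathbb Z_N\}$, with multiplication $X^i_j(p)X^k_l(q)=\delta_{j,k}\delta_{p,q}X^i_l(p)$, unit $1=\sum_{i,p}X^i_i(p)$, comultiplication $\Delta(X^i_j(s))=\sum_{p+q=s}X^i_j(p)\otimes X^{i+p}_{j+p}(q)$, counit $\varepsilon(X^i_j(s))=\delta_{s,0}$, antipode $S(X^i_j(p))=X^{j+p}_{i+p}(-p)$, and $R=\sum_{i,j,p}X^i_j(p)\otimes X^j_{j+p}(i-j)\omega^{-p(i-j)}$; $(H,R)$ is a quasitriangular weak Hopf algebra (Hayashi's face algebra). ${}_RH=C_H(H_s)=\{1_1hS(1_2)\}$ is its braided Hopf algebra with adjoint action $h\cdot x=h_1xS(h_2)$, comultiplication $\underline\Delta(x)=x_1S(R^2)\otimes R^1\cdot x_2$, counit $\varepsilon_t(h)=\varepsilon(1_1h)1_2$. *)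

theory Defs
  imports Complex_Main
begin

text \<open>Z_N is represented by the canonical residues ZN N = {0..<N} (integers),
  all index arithmetic is taken mod N.  An element of H is its coefficient
  function on the basis triples (i,j,s) standing for X^i_j(s); an element of
  H (x) H is a coefficient function on pairs of basis triples, etc.\<close>

type_synonym idx = "int \<times> int \<times> int"
type_synonym hel = "idx \<Rightarrow> complex"
type_synonym hel2 = "idx \<Rightarrow> idx \<Rightarrow> complex"
type_synonym hel3 = "idx \<Rightarrow> idx \<Rightarrow> idx \<Rightarrow> complex"

definition ZN :: "nat \<Rightarrow> int set" where
  "ZN N = {0..<int N}"

definition Bas :: "nat \<Rightarrow> idx set" where
  "Bas N = ZN N \<times> ZN N \<times> ZN N"

definition primitive_root :: "nat \<Rightarrow> complex \<Rightarrow> bool" where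
  "primitive_root N \<omega> \<longleftrightarrow> \<omega> ^ N = 1 \<and> (\<forall>k. 0 < k \<and> k < N \<longrightarrow> \<omega> ^ k \<noteq> 1)"

definition Hc :: "nat \<Rightarrow> hel set" where
  "Hc N = {x. \<forall>u. u \<notin> Bas N \<longrightarrow> x u = 0}"

text \<open>Basis vector X^i_j(s), indices read mod N.\<close>
definition X :: "nat \<Rightarrow> int \<Rightarrow> int \<Rightarrow> int \<Rightarrow> hel" where
  "X N i j s = (\<lambda>u. if u = (i mod int N, j mod int N, s mod int N) then 1 else 0)"

definition Xb :: "nat \<Rightarrow> idx \<Rightarrow> hel" where
  "Xb N u = (case u of (i, j, s) \<Rightarrow> X N i j s)"

definition tens :: "hel \<Rightarrow> hel \<Rightarrow> hel2" where
  "tens x y = (\<lambda>a b. x a * y b)"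

definition bprod :: "nat \<Rightarrow> idx \<Rightarrow> idx \<Rightarrow> hel" where
  "bprod N v w = (case v of (i, j, p) \<Rightarrow> case w of (k, l, q) \<Rightarrow>
      if j mod int N = k mod int N \<and> p mod int N = q mod int N then X N i l p else (\<lambda>_. 0))"

definition mul :: "nat \<Rightarrow> hel \<Rightarrow> hel \<Rightarrow> hel" where
  "mul N x y = (\<lambda>t. \<Sum>v\<in>Bas N. \<Sum>w\<in>Bas N. x v * y w * bprod N v w t)"

definition one :: "nat \<Rightarrow> hel" where
  "one N = (\<lambda>t. \<Sum>i\<in>ZN N. \<Sum>p\<in>ZN N. X N i i p t)"

definition bDelta :: "nat \<Rightarrow> idx \<Rightarrow> hel2" where
  "bDelta N v = (case v of (i, j, s) \<Rightarrow> (\<lambda>a b. \<Sum>p\<in>ZN N. \<Sum>q\<in>ZN N.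
      if (p + q) mod int N = s mod int N then tens (X N i j p) (X N (i + p) (j + p) q) a b else 0))"

definition Delta :: "nat \<Rightarrow> hel \<Rightarrow> hel2" where
  "Delta N x = (\<lambda>a b. \<Sum>v\<in>Bas N. x v * bDelta N v a b)"

definition eps :: "nat \<Rightarrow> hel \<Rightarrow> complex" where
  "eps N x = (\<Sum>(i, j, s)\<in>Bas N. x (i, j, s) * (if s = 0 then 1 else 0))"

definition S :: "nat \<Rightarrow> hel \<Rightarrow> hel" where
  "S N x = (\<lambda>t. \<Sum>(i, j, p)\<in>Bas N. x (i, j, p) * X N (j + p) (i + p) (- p) t)"

definition Rm :: "nat \<Rightarrow> complex \<Rightarrow> hel2" where
  "Rm N \<omega> = (\<lambda>a b. \<Sum>(i, j, p)\<in>Bas N.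
      \<omega> powi (- (p * (i - j))) * tens (X N i j p) (X N j (j + p) (i - j)) a b)"

definition act :: "nat \<Rightarrow> hel \<Rightarrow> hel \<Rightarrow> hel" where
  "act N h x = (\<lambda>t. \<Sum>u\<in>Bas N. \<Sum>v\<in>Bas N.
      Delta N h u v * mul N (Xb N u) (mul N x (S N (Xb N v))) t)"

definition RH :: "nat \<Rightarrow> hel set" where
  "RH N = {act N (one N) h | h. h \<in> Hc N}"

text \<open>Braided comultiplication x_1 S(R^2) (x) R^1 . x_2.\<close>
definition udelta :: "nat \<Rightarrow> complex \<Rightarrow> hel \<Rightarrow> hel2" where
  "udelta N \<omega> x = (\<lambda>a b. \<Sum>u\<in>Bas N. \<Sum>v\<in>Bas N. \<Sum>c\<in>Bas N. \<Sum>d\<in>Bas N.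
      Delta N x u v * Rm N \<omega> c d * mul N (Xb N u) (S N (Xb N d)) a * act N (Xb N c) (Xb N v) b)"

text \<open>Target counit eps_t(h) = eps(1_1 h) 1_2.\<close>
definition epst :: "nat \<Rightarrow> hel \<Rightarrow> hel" where
  "epst N h = (\<lambda>t. \<Sum>u\<in>Bas N. \<Sum>v\<in>Bas N.
      Delta N (one N) u v * eps N (mul N (Xb N u) h) * Xb N v t)"

definition Hi :: "nat \<Rightarrow> int \<Rightarrow> hel set" where
  "Hi N i = {x. \<exists>c. x = (\<lambda>t. \<Sum>p\<in>ZN N. c p * X N i i p t)}"

definition onei :: "nat \<Rightarrow> int \<Rightarrow> hel" where
  "onei N i = (\<lambda>t. \<Sum>p\<in>ZN N. X N i i p t)"

definition Santi :: "nat \<Rightarrow> int \<Rightarrow> hel \<Rightarrow> hel" where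
  "Santi N i x = (\<lambda>t. \<Sum>p\<in>ZN N. x (i, i, p) * X N i i (- p) t)"

definition iota :: "nat \<Rightarrow> int \<Rightarrow> int \<Rightarrow> hel \<Rightarrow> hel" where
  "iota N i j x = (\<lambda>t. \<Sum>p\<in>ZN N. x (i, i, p) * X N j j p t)"

definition Tens2 :: "hel set \<Rightarrow> hel2 set" where
  "Tens2 V = {(\<lambda>a b. \<Sum>k<(n::nat). tens (f k) (g k) a b) | n f g. \<forall>k<n. f k \<in> V \<and> g k \<in> V}"

definition mul2 :: "nat \<Rightarrow> (hel \<Rightarrow> hel \<Rightarrow> hel) \<Rightarrow> hel2 \<Rightarrow> hel2 \<Rightarrow> hel2" where
  "mul2 N m A B = (\<lambda>a b. \<Sum>u\<in>Bas N. \<Sum>v\<in>Bas N. \<Sum>w\<in>Bas N. \<Sum>z\<in>Bas N.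
      A u v * B w z * m (Xb N u) (Xb N w) a * m (Xb N v) (Xb N z) b)"

definition lin_l :: "nat \<Rightarrow> (hel \<Rightarrow> hel2) \<Rightarrow> hel2 \<Rightarrow> hel3" where
  "lin_l N F A = (\<lambda>a b c. \<Sum>u\<in>Bas N. \<Sum>v\<in>Bas N. A u v * F (Xb N u) a b * Xb N v c)"

definition lin_r :: "nat \<Rightarrow> (hel \<Rightarrow> hel2) \<Rightarrow> hel2 \<Rightarrow> hel3" where
  "lin_r N F A = (\<lambda>a b c. \<Sum>u\<in>Bas N. \<Sum>v\<in>Bas N. A u v * Xb N u a * F (Xb N v) b c)"

definition map2 :: "nat \<Rightarrow> (hel \<Rightarrow> hel) \<Rightarrow> (hel \<Rightarrow> hel) \<Rightarrow> hel2 \<Rightarrow> hel2" where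
  "map2 N f g A = (\<lambda>a b. \<Sum>u\<in>Bas N. \<Sum>v\<in>Bas N. A u v * f (Xb N u) a * g (Xb N v) b)"

definition conv :: "nat \<Rightarrow> (hel \<Rightarrow> hel \<Rightarrow> hel) \<Rightarrow> (hel \<Rightarrow> hel) \<Rightarrow> (hel \<Rightarrow> hel) \<Rightarrow> hel2 \<Rightarrow> hel" where
  "conv N m f g A = (\<lambda>t. \<Sum>u\<in>Bas N. \<Sum>v\<in>Bas N. A u v * m (f (Xb N u)) (g (Xb N v)) t)"

definition is_subspace :: "hel set \<Rightarrow> bool" where
  "is_subspace V \<longleftrightarrow> (\<lambda>_. 0) \<in> V \<and> (\<forall>x\<in>V. \<forall>y\<in>V. (\<lambda>t. x t + y t) \<in> V)
     \<and> (\<forall>c. \<forall>x\<in>V. (\<lambda>t. c * x t) \<in> V)"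

definition lin_on :: "hel set \<Rightarrow> (hel \<Rightarrow> hel) \<Rightarrow> bool" where
  "lin_on V f \<longleftrightarrow> (\<forall>x\<in>V. \<forall>y\<in>V. f (\<lambda>t. x t + y t) = (\<lambda>t. f x t + f y t))
     \<and> (\<forall>c. \<forall>x\<in>V. f (\<lambda>t. c * x t) = (\<lambda>t. c * f x t))"

definition lin_on2 :: "hel set \<Rightarrow> (hel \<Rightarrow> hel2) \<Rightarrow> bool" where
  "lin_on2 V f \<longleftrightarrow> (\<forall>x\<in>V. \<forall>y\<in>V. f (\<lambda>t. x t + y t) = (\<lambda>a b. f x a b + f y a b))
     \<and> (\<forall>c. \<forall>x\<in>V. f (\<lambda>t. c * x t) = (\<lambda>a b. c * f x a b))"

text \<open>V is a Hopf algebra over the ground algebra C e (unit e), with multiplication m,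
  comultiplication D, counit ep (valued in C e) and antipode an.\<close>
definition hopf_over :: "nat \<Rightarrow> hel set \<Rightarrow> hel \<Rightarrow> (hel \<Rightarrow> hel \<Rightarrow> hel) \<Rightarrow> (hel \<Rightarrow> hel2)
    \<Rightarrow> (hel \<Rightarrow> hel) \<Rightarrow> (hel \<Rightarrow> hel) \<Rightarrow> bool" where
  "hopf_over N V e m D ep an \<longleftrightarrow>
     is_subspace V \<and> e \<in> V
   \<and> (\<forall>x\<in>V. \<forall>y\<in>V. m x y \<in> V)
   \<and> (\<forall>z\<in>V. lin_on V (\<lambda>x. m x z) \<and> lin_on V (\<lambda>x. m z x))
   \<and> (\<forall>x\<in>V. \<forall>y\<in>V. \<forall>z\<in>V. m (m x y) z = m x (m y z))
   \<and> (\<forall>x\<in>V. m e x = x \<and> m x e = x)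
   \<and> lin_on2 V D \<and> (\<forall>x\<in>V. D x \<in> Tens2 V)
   \<and> (\<forall>x\<in>V. lin_l N D (D x) = lin_r N D (D x))
   \<and> lin_on V ep \<and> (\<forall>x\<in>V. \<exists>c. ep x = (\<lambda>t. c * e t))
   \<and> (\<forall>x\<in>V. conv N m ep id (D x) = x \<and> conv N m id ep (D x) = x)
   \<and> D e = tens e e \<and> (\<forall>x\<in>V. \<forall>y\<in>V. D (m x y) = mul2 N m (D x) (D y))
   \<and> ep e = e \<and> (\<forall>x\<in>V. \<forall>y\<in>V. ep (m x y) = m (ep x) (ep y))
   \<and> lin_on V an \<and> (\<forall>x\<in>V. an x \<in> V)
   \<and> (\<forall>x\<in>V. conv N m an id (D x) = ep x \<and> conv N m id an (D x) = ep x)"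

definition hopf_iso :: "nat \<Rightarrow> hel set \<Rightarrow> hel set \<Rightarrow> hel \<Rightarrow> hel \<Rightarrow> (hel \<Rightarrow> hel \<Rightarrow> hel) \<Rightarrow> (hel \<Rightarrow> hel2)
    \<Rightarrow> (hel \<Rightarrow> hel) \<Rightarrow> (hel \<Rightarrow> hel) \<Rightarrow> (hel \<Rightarrow> hel) \<Rightarrow> (hel \<Rightarrow> hel) \<Rightarrow> (hel \<Rightarrow> hel) \<Rightarrow> bool" where
  "hopf_iso N V W eV eW m D epV epW anV anW f \<longleftrightarrow>
     bij_betw f V W \<and> lin_on V f
   \<and> f eV = eW \<and> (\<forall>x\<in>V. \<forall>y\<in>V. f (m x y) = m (f x) (f y))
   \<and> (\<forall>x\<in>V. D (f x) = map2 N f f (D x))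
   \<and> (\<forall>x\<in>V. epW (f x) = f (epV x))
   \<and> (\<forall>x\<in>V. anW (f x) = f (anV x))"

end

theory Submission
  imports Defs
begin


lemma ZN_mod: "x \<in> ZN N \<Longrightarrow> x mod int N = x"
  by (auto simp: ZN_def)

lemma mod_ZN: "N > 0 \<Longrightarrow> a mod int N \<in> ZN N"
  by (auto simp: ZN_def)

lemma fin_ZN[simp]: "finite (ZN N)" by (simp add: ZN_def)
lemma fin_Bas[simp]: "finite (Bas N)" by (simp add: Bas_def)

lemma X_mod1[simp]: "X N (a mod int N) b c = X N a b c" by (simp add: X_def)
lemma X_mod2[simp]: "X N a (b mod int N) c = X N a b c" by (simp add: X_def)
lemma X_mod3[simp]: "X N a b (c mod int N) = X N a b c" by (simp add: X_def)

lemma X_ma1[simp]: "X N (a mod int N + p) b c = X N (a + p) b c" by (simp add: X_def mod_add_left_eq)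
lemma X_ma2[simp]: "X N a (b mod int N + p) c = X N a (b + p) c" by (simp add: X_def mod_add_left_eq)
lemma X_cong: "a mod int N = a' mod int N \<Longrightarrow> b mod int N = b' mod int N \<Longrightarrow> c mod int N = c' mod int N \<Longrightarrow> X N a b c = X N a' b' c'"
  by (simp add: X_def)

lemma Xsum: assumes "N > 0"
  shows "(\<Sum>u\<in>Bas N. X N a b c u * F u) = F (a mod int N, b mod int N, c mod int N)"
proof -
  have m: "(a mod int N, b mod int N, c mod int N) \<in> Bas N" using assms by (simp add: Bas_def mod_ZN)
  have "(\<Sum>u\<in>Bas N. X N a b c u * F u) = (\<Sum>u\<in>Bas N. if u = (a mod int N, b mod int N, c mod int N) then F u else 0)"
    by (rule sum.cong) (auto simp: X_def)
  also have "\<dots> = F (a mod int N, b mod int N, c mod int N)" using m by simp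
  finally show ?thesis .
qed

lemma Xb_mod: "Xb N (a mod int N, b mod int N, c mod int N) = X N a b c" by (simp add: Xb_def)

lemma mul_X: assumes "N > 0"
  shows "mul N (X N a b c) (X N d e f) t = (if b mod int N = d mod int N \<and> c mod int N = f mod int N then X N a e c t else 0)"
proof -
  have "mul N (X N a b c) (X N d e f) t = (\<Sum>v\<in>Bas N. X N a b c v * (\<Sum>w\<in>Bas N. X N d e f w * bprod N v w t))"
    by (simp add: mul_def sum_distrib_left mult.assoc)
  also have "\<dots> = bprod N (a mod int N, b mod int N, c mod int N) (d mod int N, e mod int N, f mod int N) t"
    using assms by (simp add: Xsum)
  finally show ?thesis by (auto simp: bprod_def intro: X_cong[THEN fun_cong])
qed

lemma S_X: assumes "N > 0"
  shows "S N (X N a b c) = X N (b + c) (a + c) (- c)"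
proof
  fix t
  have "S N (X N a b c) t = (\<Sum>u\<in>Bas N. X N a b c u * (case u of (i, j, p) \<Rightarrow> X N (j + p) (i + p) (- p) t))"
    unfolding S_def by (rule sum.cong) auto
  also have "\<dots> = X N (b mod int N + c mod int N) (a mod int N + c mod int N) (- (c mod int N)) t"
    using assms by (simp add: Xsum)
  also have "\<dots> = X N (b + c) (a + c) (- c) t"
    by (simp add: X_def mod_add_eq mod_minus_eq)
  finally show "S N (X N a b c) t = X N (b + c) (a + c) (- c) t" .
qed

lemma Delta_X: assumes "N > 0"
  shows "Delta N (X N a b c) u v = (\<Sum>p\<in>ZN N. \<Sum>q\<in>ZN N.
      if (p + q) mod int N = c mod int N then X N a b p u * X N (a + p) (b + p) q v else 0)"
proof -
  have "Delta N (X N a b c) u v = bDelta N (a mod int N, b mod int N, c mod int N) u v"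
    using assms by (simp add: Delta_def Xsum)
  also have "\<dots> = (\<Sum>p\<in>ZN N. \<Sum>q\<in>ZN N.
      if (p + q) mod int N = c mod int N then X N a b p u * X N (a + p) (b + p) q v else 0)"
    unfolding bDelta_def tens_def by (simp only: X_mod1 X_mod2 X_ma1 X_ma2 split_conv mod_mod_trivial)
  finally show ?thesis .
qed

lemma Xsum2: assumes "N > 0"
  shows "(\<Sum>u\<in>Bas N. \<Sum>v\<in>Bas N. X N a b c u * (X N d e f v * G u v)) = G (a mod int N, b mod int N, c mod int N) (d mod int N, e mod int N, f mod int N)"
proof -
  have "(\<Sum>u\<in>Bas N. \<Sum>v\<in>Bas N. X N a b c u * (X N d e f v * G u v)) = (\<Sum>u\<in>Bas N. X N a b c u * (\<Sum>v\<in>Bas N. X N d e f v * G u v))"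
    by (simp add: sum_distrib_left)
  then show ?thesis using assms by (simp add: Xsum)
qed

lemma swap4: "(\<Sum>u\<in>A. \<Sum>v\<in>B. \<Sum>p\<in>P. \<Sum>q\<in>Q. h u v p q) = (\<Sum>p\<in>P. \<Sum>q\<in>Q. \<Sum>u\<in>A. \<Sum>v\<in>B. h u v p q)"
proof -
  have "(\<Sum>u\<in>A. \<Sum>v\<in>B. \<Sum>p\<in>P. \<Sum>q\<in>Q. h u v p q) = (\<Sum>u\<in>A. \<Sum>p\<in>P. \<Sum>q\<in>Q. \<Sum>v\<in>B. h u v p q)"
    by (rule sum.cong[OF refl], subst sum.swap, rule sum.cong[OF refl], subst sum.swap, rule refl)
  also have "\<dots> = (\<Sum>p\<in>P. \<Sum>q\<in>Q. \<Sum>u\<in>A. \<Sum>v\<in>B. h u v p q)"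
    by (subst sum.swap, rule sum.cong[OF refl], subst sum.swap, rule refl)
  finally show ?thesis .
qed

lemma coll2: assumes "N > 0"
  shows "(\<Sum>u\<in>Bas N. \<Sum>v\<in>Bas N. (\<Sum>p\<in>P. \<Sum>q\<in>Q. if C p q then X N (a p q) (b p q) (c p q) u * X N (d p q) (e p q) (f p q) v else 0) * G u v)
   = (\<Sum>p\<in>P. \<Sum>q\<in>Q. if C p q then G (a p q mod int N, b p q mod int N, c p q mod int N) (d p q mod int N, e p q mod int N, f p q mod int N) else 0)"
proof -
  have "(\<Sum>u\<in>Bas N. \<Sum>v\<in>Bas N. (\<Sum>p\<in>P. \<Sum>q\<in>Q. if C p q then X N (a p q) (b p q) (c p q) u * X N (d p q) (e p q) (f p q) v else 0) * G u v)
    = (\<Sum>u\<in>Bas N. \<Sum>v\<in>Bas N. \<Sum>p\<in>P. \<Sum>q\<in>Q. if C p q then X N (a p q) (b p q) (c p q) u * (X N (d p q) (e p q) (f p q) v * G u v) else 0)"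
    by (auto simp: sum_distrib_right mult.assoc intro!: sum.cong)
  also have "\<dots> = (\<Sum>p\<in>P. \<Sum>q\<in>Q. \<Sum>u\<in>Bas N. \<Sum>v\<in>Bas N. if C p q then X N (a p q) (b p q) (c p q) u * (X N (d p q) (e p q) (f p q) v * G u v) else 0)"
    by (rule swap4)
  also have "\<dots> = (\<Sum>p\<in>P. \<Sum>q\<in>Q. if C p q then G (a p q mod int N, b p q mod int N, c p q mod int N) (d p q mod int N, e p q mod int N, f p q mod int N) else 0)"
    using assms by (intro sum.cong refl) (simp add: Xsum2)
  finally show ?thesis .
qed

lemma mul_Xf: assumes "N > 0"
  shows "mul N (X N a b c) (X N d e f) = (if b mod int N = d mod int N \<and> c mod int N = f mod int N then X N a e c else (\<lambda>_. 0))"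
  using mul_X[OF assms] by auto

lemma mul_0r[simp]: "mul N x (\<lambda>_. 0) = (\<lambda>_. 0)" by (simp add: mul_def)
lemma mul_0l[simp]: "mul N (\<lambda>_. 0) x = (\<lambda>_. 0)" by (simp add: mul_def)

lemma neg_mod_eq: "(c::int) mod n = (-q) mod n \<Longrightarrow> (-c) mod n = q mod n"
  by (metis minus_minus mod_minus_cong)

lemma sum_delta2: assumes "finite A" "finite B" "a \<in> A" "b \<in> B"
   and "\<And>x y. x \<in> A \<Longrightarrow> y \<in> B \<Longrightarrow> (x, y) \<noteq> (a, b) \<Longrightarrow> h x y = 0"
  shows "(\<Sum>x\<in>A. \<Sum>y\<in>B. h x y) = h a b"
proof -
  have "(\<Sum>x\<in>A. \<Sum>y\<in>B. h x y) = (\<Sum>x\<in>A. if x = a then h a b else 0)"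
  proof (rule sum.cong[OF refl])
    fix x assume x: "x \<in> A"
    show "(\<Sum>y\<in>B. h x y) = (if x = a then h a b else 0)"
    proof (cases "x = a")
      case True
      then show ?thesis using assms x by (simp add: sum.remove)
    next
      case False
      then show ?thesis using assms x by simp
    qed
  qed
  then show ?thesis using assms by simp
qed

lemma act_X: assumes "N > 0"
  shows "act N (X N k l r) (X N a b c) t = (if r mod int N = 0 \<and> l mod int N = a mod int N \<and> a mod int N = b mod int N then X N k k c t else 0)"
proof -
  let ?n = "int N"
  have "act N (X N k l r) (X N a b c) t = (\<Sum>p\<in>ZN N. \<Sum>q\<in>ZN N. if (p + q) mod ?n = r mod ?n then
      mul N (Xb N (k mod ?n, l mod ?n, p mod ?n)) (mul N (X N a b c) (S N (Xb N ((k + p) mod ?n, (l + p) mod ?n, q mod ?n)))) t else 0)"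
    unfolding act_def Delta_X[OF assms] by (rule coll2[OF assms])
  also have "\<dots> = (\<Sum>p\<in>ZN N. \<Sum>q\<in>ZN N. if (p + q) mod ?n = r mod ?n then
      mul N (X N k l p) (mul N (X N a b c) (X N (l + p + q) (k + p + q) (- q))) t else 0)"
    by (intro sum.cong refl) (simp only: Xb_mod S_X[OF assms])
  also have "\<dots> = (if r mod int N = 0 \<and> l mod int N = a mod int N \<and> a mod int N = b mod int N then X N k k c t else 0)"
  proof -
    define h where "h = (\<lambda>p q. if (p + q) mod ?n = r mod ?n then
      mul N (X N k l p) (mul N (X N a b c) (X N (l + p + q) (k + p + q) (- q))) t else 0)"
    have "(\<Sum>p\<in>ZN N. \<Sum>q\<in>ZN N. h p q) = h (c mod ?n) (-c mod ?n)"
    proof (rule sum_delta2)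
      show "c mod ?n \<in> ZN N" "(-c) mod ?n \<in> ZN N" using assms by (auto simp: mod_ZN)
    next
      fix p q assume p: "p \<in> ZN N" and q: "q \<in> ZN N" and ne: "(p, q) \<noteq> (c mod ?n, - c mod ?n)"
      have pm: "p mod ?n = p" and qm: "q mod ?n = q" using p q by (auto simp: ZN_mod)
      have "p mod ?n \<noteq> c mod ?n \<or> c mod ?n \<noteq> (-q) mod ?n"
      proof (rule ccontr)
        assume "\<not> ?thesis"
        then have "p = c mod ?n" "c mod ?n = (-q) mod ?n" using pm by auto
        then show False using ne neg_mod_eq[of c ?n q] qm by auto
      qed
      then show "h p q = 0" unfolding h_def using assms by (auto simp: mul_Xf)
    qed simp_all
    moreover
    have e1: "(c mod ?n + - c mod ?n) mod ?n = 0" by (subst mod_add_eq) simp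
    have e2: "(l + c mod ?n + - c mod ?n) mod ?n = l mod ?n" for l
    proof -
      have "(l + c mod ?n + - c mod ?n) mod ?n = (l + (c mod ?n + - c mod ?n) mod ?n) mod ?n"
        by (simp only: add.assoc) (rule mod_add_right_eq[symmetric])
      then show ?thesis using e1 by simp
    qed
    have e3: "X N k (k + c mod ?n + - c mod ?n) c = X N k k c"
      by (rule X_cong) (simp_all add: e2[of k])
    have "h (c mod ?n) (-c mod ?n) = (if r mod int N = 0 \<and> l mod int N = a mod int N \<and> a mod int N = b mod int N then X N k k c t else 0)"
      using assms unfolding h_def by (simp add: mul_Xf e1 e2 e3 mod_minus_eq eq_commute[of 0])
    ultimately show ?thesis unfolding h_def by simp
  qed
  finally show ?thesis .
qed

lemma coll1: assumes "N > 0"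
  shows "(\<Sum>u\<in>Bas N. \<Sum>v\<in>Bas N. (\<Sum>x\<in>P. f x * (X N (a x) (b x) (c x) u * X N (d x) (e x) (g x) v)) * G u v)
   = (\<Sum>x\<in>P. f x * G (a x mod int N, b x mod int N, c x mod int N) (d x mod int N, e x mod int N, g x mod int N))"
proof -
  have "(\<Sum>u\<in>Bas N. \<Sum>v\<in>Bas N. (\<Sum>x\<in>P. f x * (X N (a x) (b x) (c x) u * X N (d x) (e x) (g x) v)) * G u v)
    = (\<Sum>u\<in>Bas N. \<Sum>v\<in>Bas N. \<Sum>x\<in>P. \<Sum>y\<in>{()}. f x * (X N (a x) (b x) (c x) u * (X N (d x) (e x) (g x) v * G u v)))"
    by (simp add: sum_distrib_right mult.assoc)
  also have "\<dots> = (\<Sum>x\<in>P. \<Sum>y\<in>{()}. \<Sum>u\<in>Bas N. \<Sum>v\<in>Bas N. f x * (X N (a x) (b x) (c x) u * (X N (d x) (e x) (g x) v * G u v)))"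
    by (rule swap4)
  also have "\<dots> = (\<Sum>x\<in>P. f x * (\<Sum>u\<in>Bas N. \<Sum>v\<in>Bas N. X N (a x) (b x) (c x) u * (X N (d x) (e x) (g x) v * G u v)))"
    by (simp add: sum_distrib_left)
  also have "\<dots> = (\<Sum>x\<in>P. f x * G (a x mod int N, b x mod int N, c x mod int N) (d x mod int N, e x mod int N, g x mod int N))"
    using assms by (simp add: Xsum2)
  finally show ?thesis .
qed

lemma sum_delta1: assumes "finite A" "a \<in> A" "\<And>x. x \<in> A \<Longrightarrow> x \<noteq> a \<Longrightarrow> h x = 0"
  shows "sum h A = h a"
  using assms by (simp add: sum.remove)

lemma udelta_X: assumes "N > 0" "i \<in> ZN N"
  shows "udelta N \<omega> (X N i i s) a b = (\<Sum>w\<in>ZN N. \<Sum>q\<in>ZN N. if (w + q) mod int N = s mod int N then X N i i w a * X N i i q b else 0)"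
proof -
  let ?n = "int N"
  define K where "K = (\<lambda>u v. \<Sum>c\<in>Bas N. \<Sum>d\<in>Bas N. Rm N \<omega> c d * (mul N (Xb N u) (S N (Xb N d)) a * act N (Xb N c) (Xb N v) b))"
  have "udelta N \<omega> (X N i i s) a b = (\<Sum>u\<in>Bas N. \<Sum>v\<in>Bas N. Delta N (X N i i s) u v * K u v)"
    unfolding udelta_def K_def by (simp add: sum_distrib_left mult.assoc)
  also have "\<dots> = (\<Sum>p\<in>ZN N. \<Sum>q\<in>ZN N. if (p + q) mod ?n = s mod ?n then
      K (i mod ?n, i mod ?n, p mod ?n) ((i + p) mod ?n, (i + p) mod ?n, q mod ?n) else 0)"
    unfolding Delta_X[OF assms(1)] by (rule coll2[OF assms(1)])
  also have "\<dots> = (\<Sum>p\<in>ZN N. \<Sum>q\<in>ZN N. if (p + q) mod ?n = s mod ?n then X N i i p a * X N i i q b else 0)"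
  proof (intro sum.cong refl)
    fix p q assume p: "p \<in> ZN N" and q: "q \<in> ZN N"
    have "K (i mod ?n, i mod ?n, p mod ?n) ((i + p) mod ?n, (i + p) mod ?n, q mod ?n) = X N i i p a * X N i i q b"
    proof -
      have R: "Rm N \<omega> c d = (\<Sum>x\<in>Bas N. (case x of (k, l, r) \<Rightarrow> \<omega> powi (- (r * (k - l)))) *
          (X N (fst x) (fst (snd x)) (snd (snd x)) c * X N (fst (snd x)) (fst (snd x) + snd (snd x)) (fst x - fst (snd x)) d))" for c d
        unfolding Rm_def tens_def by (rule sum.cong) auto
      have "K (i mod ?n, i mod ?n, p mod ?n) ((i + p) mod ?n, (i + p) mod ?n, q mod ?n)
        = (\<Sum>x\<in>Bas N. (case x of (k, l, r) \<Rightarrow> \<omega> powi (- (r * (k - l)))) *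
             (mul N (X N i i p) (S N (X N (fst (snd x)) (fst (snd x) + snd (snd x)) (fst x - fst (snd x)))) a
              * act N (X N (fst x) (fst (snd x)) (snd (snd x))) (X N (i + p) (i + p) q) b))"
        unfolding K_def R by (subst coll1[OF assms(1)]) (simp add: Xb_mod)
      also have "\<dots> = X N i i p a * X N i i q b"
      proof (subst sum_delta1[where a="(i, (i + p) mod ?n, 0)"])
        show "(i, (i + p) mod ?n, 0) \<in> Bas N" using assms by (simp add: Bas_def mod_ZN ZN_def)
      next
        fix x assume x: "x \<in> Bas N" and ne: "x \<noteq> (i, (i + p) mod ?n, 0)"
        obtain k l r where xe: "x = (k, l, r)" by (cases x) auto
        have k: "k \<in> ZN N" and l: "l \<in> ZN N" and r: "r \<in> ZN N" using x xe by (auto simp: Bas_def)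
        have nc: "\<not> (i mod ?n = (l + r + (k - l)) mod ?n \<and> r mod ?n = 0 \<and> l mod ?n = (i + p) mod ?n)"
        proof
          assume h: "i mod ?n = (l + r + (k - l)) mod ?n \<and> r mod ?n = 0 \<and> l mod ?n = (i + p) mod ?n"
          have "r = 0" using h r by (simp add: ZN_mod)
          moreover have "l = (i + p) mod ?n" using h l by (simp add: ZN_mod)
          moreover have "k = i" using h k assms(2) \<open>r = 0\<close> by (simp add: ZN_mod)
          ultimately show False using ne xe by simp
        qed
        show "(case x of (k, l, r) \<Rightarrow> \<omega> powi (- (r * (k - l)))) *
             (mul N (X N i i p) (S N (X N (fst (snd x)) (fst (snd x) + snd (snd x)) (fst x - fst (snd x)))) a
              * act N (X N (fst x) (fst (snd x)) (snd (snd x))) (X N (i + p) (i + p) q) b) = 0"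
          using nc assms(1) unfolding xe by (auto simp: S_X mul_Xf act_X)
      next
        have f1: "(2 * i + (p - (i + p) mod ?n)) mod ?n = i mod ?n"
        proof -
          have "(2 * i + (p - (i + p) mod ?n)) mod ?n = (2 * i + p - (i + p) mod ?n) mod ?n" by (simp add: algebra_simps)
          also have "\<dots> = (2 * i + p - (i + p)) mod ?n" by (rule mod_diff_right_eq)
          finally show ?thesis by simp
        qed
        have f2: "((i + p) mod ?n - i) mod ?n = p mod ?n" by (simp add: mod_diff_left_eq)
        have f3: "X N i (2 * i + (p - (i + p) mod ?n)) p = X N i i p" by (rule X_cong) (simp_all add: f1)
        show "(case (i, (i + p) mod ?n, 0::int) of (k, l, r) \<Rightarrow> \<omega> powi (- (r * (k - l)))) *
             (mul N (X N i i p) (S N (X N (fst (snd (i, (i + p) mod ?n, 0::int))) (fst (snd (i, (i + p) mod ?n, 0::int)) + snd (snd (i, (i + p) mod ?n, 0::int))) (fst (i, (i + p) mod ?n, 0::int) - fst (snd (i, (i + p) mod ?n, 0::int))))) a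
              * act N (X N (fst (i, (i + p) mod ?n, 0::int)) (fst (snd (i, (i + p) mod ?n, 0::int))) (snd (snd (i, (i + p) mod ?n, 0::int)))) (X N (i + p) (i + p) q) b) = X N i i p a * X N i i q b"
          using assms by (simp add: S_X mul_Xf act_X mod_minus_eq f1 f2 f3)
      qed simp
      finally show ?thesis .
    qed
    then show "(if (p + q) mod ?n = s mod ?n then K (i mod ?n, i mod ?n, p mod ?n) ((i + p) mod ?n, (i + p) mod ?n, q mod ?n) else 0)
      = (if (p + q) mod ?n = s mod ?n then X N i i p a * X N i i q b else 0)" by simp
  qed
  finally show ?thesis .
qed

lemma swap3: "(\<Sum>u\<in>A. \<Sum>v\<in>B. \<Sum>p\<in>P. h u v p) = (\<Sum>p\<in>P. \<Sum>u\<in>A. \<Sum>v\<in>B. h u v p)"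
proof -
  have "(\<Sum>u\<in>A. \<Sum>v\<in>B. \<Sum>p\<in>P. h u v p) = (\<Sum>u\<in>A. \<Sum>p\<in>P. \<Sum>v\<in>B. h u v p)"
    by (rule sum.cong[OF refl], rule sum.swap)
  also have "\<dots> = (\<Sum>p\<in>P. \<Sum>u\<in>A. \<Sum>v\<in>B. h u v p)" by (rule sum.swap)
  finally show ?thesis .
qed

lemma Delta_lin: "Delta N (\<lambda>t. \<Sum>p\<in>P. f p * g p t) u v = (\<Sum>p\<in>P. f p * Delta N (g p) u v)"
proof -
  have "Delta N (\<lambda>t. \<Sum>p\<in>P. f p * g p t) u v = (\<Sum>w\<in>Bas N. \<Sum>p\<in>P. f p * (g p w * bDelta N w u v))"
    by (simp add: Delta_def sum_distrib_right mult.assoc)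
  also have "\<dots> = (\<Sum>p\<in>P. \<Sum>w\<in>Bas N. f p * (g p w * bDelta N w u v))" by (rule sum.swap)
  finally show ?thesis by (simp add: Delta_def sum_distrib_left)
qed

lemma mul_lin1: "mul N (\<lambda>t. \<Sum>p\<in>P. f p * g p t) y t' = (\<Sum>p\<in>P. f p * mul N (g p) y t')"
proof -
  have "mul N (\<lambda>t. \<Sum>p\<in>P. f p * g p t) y t' = (\<Sum>v\<in>Bas N. \<Sum>w\<in>Bas N. \<Sum>p\<in>P. f p * (g p v * y w * bprod N v w t'))"
    by (simp add: mul_def sum_distrib_right mult.assoc)
  also have "\<dots> = (\<Sum>p\<in>P. \<Sum>v\<in>Bas N. \<Sum>w\<in>Bas N. f p * (g p v * y w * bprod N v w t'))" by (rule swap3)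
  finally show ?thesis by (simp add: mul_def sum_distrib_left)
qed

lemma mul_lin2: "mul N x (\<lambda>t. \<Sum>p\<in>P. f p * g p t) t' = (\<Sum>p\<in>P. f p * mul N x (g p) t')"
proof -
  have "mul N x (\<lambda>t. \<Sum>p\<in>P. f p * g p t) t' = (\<Sum>v\<in>Bas N. \<Sum>w\<in>Bas N. \<Sum>p\<in>P. f p * (x v * g p w * bprod N v w t'))"
    by (simp add: mul_def sum_distrib_right sum_distrib_left mult.assoc mult.left_commute)
  also have "\<dots> = (\<Sum>p\<in>P. \<Sum>v\<in>Bas N. \<Sum>w\<in>Bas N. f p * (x v * g p w * bprod N v w t'))" by (rule swap3)
  finally show ?thesis by (simp add: mul_def sum_distrib_left)
qed

lemma eps_lin: "eps N (\<lambda>t. \<Sum>p\<in>P. f p * g p t) = (\<Sum>p\<in>P. f p * eps N (g p))"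
proof -
  have "eps N (\<lambda>t. \<Sum>p\<in>P. f p * g p t) = (\<Sum>w\<in>Bas N. \<Sum>p\<in>P. f p * (g p w * (case w of (i, j, s) \<Rightarrow> if s = 0 then 1 else 0)))"
    unfolding eps_def by (rule sum.cong) (auto simp: sum_distrib_right mult.assoc)
  also have "\<dots> = (\<Sum>p\<in>P. \<Sum>w\<in>Bas N. f p * (g p w * (case w of (i, j, s) \<Rightarrow> if s = 0 then 1 else 0)))" by (rule sum.swap)
  also have "\<dots> = (\<Sum>p\<in>P. f p * eps N (g p))"
    unfolding eps_def sum_distrib_left by (intro sum.cong refl) auto
  finally show ?thesis .
qed

lemma act_lin1: "act N (\<lambda>t. \<Sum>p\<in>P. f p * g p t) x t' = (\<Sum>p\<in>P. f p * act N (g p) x t')"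
proof -
  have "act N (\<lambda>t. \<Sum>p\<in>P. f p * g p t) x t' = (\<Sum>u\<in>Bas N. \<Sum>v\<in>Bas N. \<Sum>p\<in>P. f p * (Delta N (g p) u v * mul N (Xb N u) (mul N x (S N (Xb N v))) t'))"
    by (simp add: act_def Delta_lin sum_distrib_right mult.assoc)
  also have "\<dots> = (\<Sum>p\<in>P. \<Sum>u\<in>Bas N. \<Sum>v\<in>Bas N. f p * (Delta N (g p) u v * mul N (Xb N u) (mul N x (S N (Xb N v))) t'))" by (rule swap3)
  finally show ?thesis by (simp add: act_def sum_distrib_left)
qed

lemma act_lin2: "act N h (\<lambda>t. \<Sum>p\<in>P. f p * g p t) t' = (\<Sum>p\<in>P. f p * act N h (g p) t')"
proof -
  have "act N h (\<lambda>t. \<Sum>p\<in>P. f p * g p t) t' = (\<Sum>u\<in>Bas N. \<Sum>v\<in>Bas N. \<Sum>p\<in>P. f p * (Delta N h u v * mul N (Xb N u) (mul N (g p) (S N (Xb N v))) t'))"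
  proof -
    have "mul N (\<lambda>t. \<Sum>p\<in>P. f p * g p t) z = (\<lambda>t. \<Sum>p\<in>P. f p * mul N (g p) z t)" for z
      by (rule ext) (rule mul_lin1)
    then show ?thesis
      by (simp add: act_def mul_lin2 sum_distrib_left mult.left_commute)
  qed
  also have "\<dots> = (\<Sum>p\<in>P. \<Sum>u\<in>Bas N. \<Sum>v\<in>Bas N. f p * (Delta N h u v * mul N (Xb N u) (mul N (g p) (S N (Xb N v))) t'))" by (rule swap3)
  finally show ?thesis by (simp add: act_def sum_distrib_left)
qed

lemma udelta_lin: "udelta N \<omega> (\<lambda>t. \<Sum>p\<in>P. f p * g p t) a b = (\<Sum>p\<in>P. f p * udelta N \<omega> (g p) a b)"
proof -
  define K where "K = (\<lambda>u v. \<Sum>c\<in>Bas N. \<Sum>d\<in>Bas N. Rm N \<omega> c d * (mul N (Xb N u) (S N (Xb N d)) a * act N (Xb N c) (Xb N v) b))"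
  have U: "udelta N \<omega> x a b = (\<Sum>u\<in>Bas N. \<Sum>v\<in>Bas N. Delta N x u v * K u v)" for x
    unfolding udelta_def K_def by (simp add: sum_distrib_left mult.assoc)
  have "(\<Sum>u\<in>Bas N. \<Sum>v\<in>Bas N. Delta N (\<lambda>t. \<Sum>p\<in>P. f p * g p t) u v * K u v)
     = (\<Sum>u\<in>Bas N. \<Sum>v\<in>Bas N. \<Sum>p\<in>P. f p * (Delta N (g p) u v * K u v))"
    by (simp add: Delta_lin sum_distrib_right mult.assoc)
  also have "\<dots> = (\<Sum>p\<in>P. \<Sum>u\<in>Bas N. \<Sum>v\<in>Bas N. f p * (Delta N (g p) u v * K u v))" by (rule swap3)
  finally show ?thesis unfolding U by (simp add: sum_distrib_left)
qed

lemma epst_lin: "epst N (\<lambda>t. \<Sum>p\<in>P. f p * g p t) t' = (\<Sum>p\<in>P. f p * epst N (g p) t')"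
proof -
  have m: "mul N (Xb N u) (\<lambda>t. \<Sum>p\<in>P. f p * g p t) = (\<lambda>t. \<Sum>p\<in>P. f p * mul N (Xb N u) (g p) t)" for u
    by (rule ext) (rule mul_lin2)
  have "epst N (\<lambda>t. \<Sum>p\<in>P. f p * g p t) t' = (\<Sum>u\<in>Bas N. \<Sum>v\<in>Bas N. \<Sum>p\<in>P. f p * (Delta N (one N) u v * eps N (mul N (Xb N u) (g p)) * Xb N v t'))"
    unfolding epst_def m eps_lin by (simp add: sum_distrib_right sum_distrib_left mult.assoc mult.left_commute)
  also have "\<dots> = (\<Sum>p\<in>P. \<Sum>u\<in>Bas N. \<Sum>v\<in>Bas N. f p * (Delta N (one N) u v * eps N (mul N (Xb N u) (g p)) * Xb N v t'))" by (rule swap3)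
  finally show ?thesis by (simp add: epst_def sum_distrib_left)
qed

lemma eps_0[simp]: "eps N (\<lambda>_. 0) = 0" by (simp add: eps_def)

lemma eps_X: assumes "N > 0" shows "eps N (X N a b c) = (if c mod int N = 0 then 1 else 0)"
proof -
  have "eps N (X N a b c) = (\<Sum>u\<in>Bas N. X N a b c u * (case u of (i, j, s) \<Rightarrow> if s = 0 then 1 else 0))"
    unfolding eps_def by (rule sum.cong) auto
  then show ?thesis using assms by (simp add: Xsum)
qed

lemma one_sum: "one N = (\<lambda>t. \<Sum>k\<in>ZN N. 1 * (\<lambda>t. \<Sum>p\<in>ZN N. 1 * X N k k p t) t)"
  by (simp add: one_def)

lemma onei_eq: "onei N i = (\<lambda>t. \<Sum>p\<in>ZN N. 1 * X N i i p t)" by (simp add: onei_def)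

lemma epst_X: assumes "N > 0" "i \<in> ZN N" "s \<in> ZN N"
  shows "epst N (X N i i s) t = (if s = 0 then onei N i t else 0)"
proof -
  let ?n = "int N"
  define G where "G = (\<lambda>u v. eps N (mul N (Xb N u) (X N i i s)) * Xb N v t)"
  have E: "epst N h t = (\<Sum>u\<in>Bas N. \<Sum>v\<in>Bas N. Delta N (one N) u v * G u v)" if "h = X N i i s" for h
    unfolding epst_def G_def that by (simp add: mult.assoc)
  have D1: "Delta N (one N) u v = (\<Sum>k\<in>ZN N. \<Sum>p\<in>ZN N. Delta N (X N k k p) u v)" for u v
    by (subst one_sum, simp only: Delta_lin) simp
  have "epst N (X N i i s) t = (\<Sum>u\<in>Bas N. \<Sum>v\<in>Bas N. \<Sum>k\<in>ZN N. \<Sum>p\<in>ZN N. Delta N (X N k k p) u v * G u v)"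
    by (simp add: E D1 sum_distrib_right)
  also have "\<dots> = (\<Sum>k\<in>ZN N. \<Sum>p\<in>ZN N. \<Sum>u\<in>Bas N. \<Sum>v\<in>Bas N. Delta N (X N k k p) u v * G u v)" by (rule swap4)
  also have "\<dots> = (\<Sum>k\<in>ZN N. \<Sum>p\<in>ZN N. \<Sum>p1\<in>ZN N. \<Sum>q1\<in>ZN N. if (p1 + q1) mod ?n = p mod ?n then
       eps N (mul N (X N k k p1) (X N i i s)) * X N (k + p1) (k + p1) q1 t else 0)"
    unfolding Delta_X[OF assms(1)] by (simp only: coll2[OF assms(1)] G_def Xb_mod)
  also have "\<dots> = (\<Sum>k\<in>ZN N. \<Sum>p\<in>ZN N. \<Sum>p1\<in>ZN N. \<Sum>q1\<in>ZN N. if q1 = p then if p1 = s then if k = i then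
       (if s = 0 then X N i i p t else 0) else 0 else 0 else 0)"
  proof (intro sum.cong refl)
    fix k p p1 q1 assume k: "k \<in> ZN N" and p: "p \<in> ZN N" and p1: "p1 \<in> ZN N" and q1: "q1 \<in> ZN N"
    have km: "k mod ?n = k" "p mod ?n = p" "p1 mod ?n = p1" "q1 mod ?n = q1" "i mod ?n = i" "s mod ?n = s"
      using k p p1 q1 assms by (auto simp: ZN_mod)
    show "(if (p1 + q1) mod ?n = p mod ?n then eps N (mul N (X N k k p1) (X N i i s)) * X N (k + p1) (k + p1) q1 t else 0)
       = (if q1 = p then if p1 = s then if k = i then (if s = 0 then X N i i p t else 0) else 0 else 0 else 0)"
      using assms(1) km by (auto simp: mul_Xf eps_X)
  qed
  also have "\<dots> = (\<Sum>k\<in>ZN N. \<Sum>p\<in>ZN N. if k = i then (if s = 0 then X N i i p t else 0) else 0)"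
    using assms by simp
  also have "\<dots> = (\<Sum>p\<in>ZN N. \<Sum>k\<in>ZN N. if k = i then (if s = 0 then X N i i p t else 0) else 0)"
    by (rule sum.swap)
  also have "\<dots> = (if s = 0 then onei N i t else 0)"
    using assms by (simp add: onei_def)
  finally show ?thesis .
qed

definition hs :: "nat \<Rightarrow> int \<Rightarrow> (int \<Rightarrow> complex) \<Rightarrow> hel" where
  "hs N i c = (\<lambda>t. \<Sum>p\<in>ZN N. c p * X N i i p t)"

definition inB :: "nat \<Rightarrow> int \<Rightarrow> idx \<Rightarrow> bool" where
  "inB N i t \<longleftrightarrow> fst t = i \<and> fst (snd t) = i \<and> snd (snd t) \<in> ZN N"

abbreviation th :: "idx \<Rightarrow> int" where "th t \<equiv> snd (snd t)"

lemma Hi_hs: "x \<in> Hi N i \<longleftrightarrow> (\<exists>c. x = hs N i c)"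
  by (simp add: Hi_def hs_def)

lemma X_pt: assumes "i \<in> ZN N" "p \<in> ZN N"
  shows "X N i i p t = (if t = (i, i, p) then 1 else 0)"
  using assms by (simp add: X_def ZN_mod)

lemma XZ: assumes "i \<in> ZN N"
  shows "(\<Sum>w\<in>ZN N. X N i i w a * F w) = (if inB N i a then F (th a) else 0)"
proof (cases "inB N i a")
  case True
  then obtain al where a: "a = (i, i, al)" "al \<in> ZN N" by (cases a) (auto simp: inB_def)
  have "(\<Sum>w\<in>ZN N. X N i i w a * F w) = (\<Sum>w\<in>ZN N. if w = al then F w else 0)"
    by (rule sum.cong) (auto simp: X_pt assms a)
  then show ?thesis using True a by simp
next
  case False
  have "(\<Sum>w\<in>ZN N. X N i i w a * F w) = 0"
    by (rule sum.neutral) (use False assms in \<open>auto simp: X_pt inB_def\<close>)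
  then show ?thesis using False by simp
qed

lemma hs_pt: assumes "i \<in> ZN N"
  shows "hs N i c t = (if inB N i t then c (th t) else 0)"
  using XZ[OF assms, of t c] by (simp add: hs_def mult.commute)

lemma hs_eq_iff: assumes "i \<in> ZN N"
  shows "hs N i c = hs N i d \<longleftrightarrow> (\<forall>p\<in>ZN N. c p = d p)"
proof
  assume h: "hs N i c = hs N i d"
  show "\<forall>p\<in>ZN N. c p = d p"
  proof
    fix p assume p: "p \<in> ZN N"
    have "hs N i c (i, i, p) = hs N i d (i, i, p)" using h by simp
    then show "c p = d p" using p assms by (simp add: hs_pt inB_def)
  qed
next
  assume "\<forall>p\<in>ZN N. c p = d p"
  then show "hs N i c = hs N i d" by (auto simp: hs_def intro!: sum.cong)
qed

lemma mul_hs: assumes "N > 0" "i \<in> ZN N"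
  shows "mul N (hs N i c) (hs N i d) = hs N i (\<lambda>p. c p * d p)"
proof
  fix t
  have "mul N (hs N i c) (hs N i d) t = (\<Sum>p\<in>ZN N. c p * (\<Sum>q\<in>ZN N. d q * mul N (X N i i p) (X N i i q) t))"
    unfolding hs_def mul_lin1 mul_lin2 ..
  also have "\<dots> = (\<Sum>p\<in>ZN N. c p * (\<Sum>q\<in>ZN N. if q = p then d p * X N i i p t else 0))"
    using assms by (intro sum.cong refl arg_cong[where f="\<lambda>z. _ * z"]) (auto simp: mul_X ZN_mod)
  also have "\<dots> = hs N i (\<lambda>p. c p * d p) t" by (simp add: hs_def mult.assoc)
  finally show "mul N (hs N i c) (hs N i d) t = hs N i (\<lambda>p. c p * d p) t" .
qed

lemma udelta_Xpt: assumes "N > 0" "i \<in> ZN N" "s \<in> ZN N"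
  shows "udelta N \<omega> (X N i i s) a b = (if inB N i a \<and> inB N i b \<and> (th a + th b) mod int N = s then 1 else 0)"
proof -
  have "udelta N \<omega> (X N i i s) a b = (\<Sum>w\<in>ZN N. X N i i w a * (\<Sum>q\<in>ZN N. X N i i q b * (if (w + q) mod int N = s then 1 else 0)))"
    unfolding udelta_X[OF assms(1,2)] using assms(3) by (auto simp: ZN_mod sum_distrib_left intro!: sum.cong)
  then show ?thesis using assms by (simp add: XZ)
qed

lemma udelta_hs: assumes "N > 0" "i \<in> ZN N"
  shows "udelta N \<omega> (hs N i c) a b = (if inB N i a \<and> inB N i b then c ((th a + th b) mod int N) else 0)"
proof -
  have "udelta N \<omega> (hs N i c) a b = (\<Sum>p\<in>ZN N. c p * udelta N \<omega> (X N i i p) a b)"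
    unfolding hs_def udelta_lin ..
  also have "\<dots> = (\<Sum>p\<in>ZN N. if p = (th a + th b) mod int N then (if inB N i a \<and> inB N i b then c p else 0) else 0)"
    using assms by (intro sum.cong refl) (auto simp: udelta_Xpt)
  also have "\<dots> = (if inB N i a \<and> inB N i b then c ((th a + th b) mod int N) else 0)"
    using assms by (simp add: mod_ZN)
  finally show ?thesis .
qed

lemma epst_hs: assumes "N > 0" "i \<in> ZN N"
  shows "epst N (hs N i c) = hs N i (\<lambda>_. c 0)"
proof
  fix t
  have "epst N (hs N i c) t = (\<Sum>p\<in>ZN N. c p * epst N (X N i i p) t)"
    unfolding hs_def epst_lin ..
  also have "\<dots> = (\<Sum>p\<in>ZN N. if p = 0 then c 0 * onei N i t else 0)"
    using assms by (intro sum.cong refl) (auto simp: epst_X)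
  also have "\<dots> = hs N i (\<lambda>_. c 0) t"
    using assms by (simp add: onei_def hs_def ZN_def sum_distrib_left)
  finally show "epst N (hs N i c) t = hs N i (\<lambda>_. c 0) t" .
qed

lemma BS: fixes F :: "idx \<Rightarrow> complex" assumes "i \<in> ZN N"
  shows "(\<Sum>u\<in>Bas N. if inB N i u then F u else 0) = (\<Sum>p\<in>ZN N. F (i, i, p))"
proof -
  have sub: "(\<lambda>p. (i, i, p)) ` ZN N \<subseteq> Bas N" using assms by (auto simp: Bas_def)
  have "(\<Sum>u\<in>Bas N. if inB N i u then F u else 0) = (\<Sum>u\<in>Bas N. if u \<in> (\<lambda>p. (i, i, p)) ` ZN N then F u else 0)"
    by (rule sum.cong) (auto simp: inB_def image_iff)
  also have "\<dots> = (\<Sum>u\<in>(\<lambda>p. (i, i, p)) ` ZN N. F u)"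
    using sub by (simp add: sum.If_cases Int_absorb1)
  also have "\<dots> = (\<Sum>p\<in>ZN N. F (i, i, p))"
    by (subst sum.reindex) (auto simp: inj_on_def)
  finally show ?thesis .
qed

lemma BS2: fixes f G :: "idx \<Rightarrow> idx \<Rightarrow> complex" assumes "i \<in> ZN N"
  shows "(\<Sum>u\<in>Bas N. \<Sum>v\<in>Bas N. (if inB N i u \<and> inB N i v then f u v else 0) * G u v)
    = (\<Sum>w\<in>ZN N. \<Sum>q\<in>ZN N. f (i, i, w) (i, i, q) * G (i, i, w) (i, i, q))"
proof -
  have "(\<Sum>u\<in>Bas N. \<Sum>v\<in>Bas N. (if inB N i u \<and> inB N i v then f u v else 0) * G u v)
     = (\<Sum>u\<in>Bas N. if inB N i u then (\<Sum>v\<in>Bas N. if inB N i v then f u v * G u v else 0) else 0)"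
    by (intro sum.cong refl) (auto intro!: sum.cong)
  also have "\<dots> = (\<Sum>w\<in>ZN N. \<Sum>q\<in>ZN N. f (i, i, w) (i, i, q) * G (i, i, w) (i, i, q))"
    using assms by (simp add: BS)
  finally show ?thesis .
qed

lemma Xb_iip: "Xb N (i, i, p) = X N i i p" by (simp add: Xb_def)

lemma inB_iip: "i \<in> ZN N \<Longrightarrow> p \<in> ZN N \<Longrightarrow> inB N i (i, i, p)" by (simp add: inB_def)

lemma X_hs: assumes "i \<in> ZN N" "w \<in> ZN N"
  shows "X N i i w = hs N i (\<lambda>p. if p = w then 1 else 0)"
  using assms by (auto simp: hs_pt X_pt inB_def)

lemma onei_hs: "onei N i = hs N i (\<lambda>_. 1)" by (simp add: onei_def hs_def)

lemma mulXX: assumes "N > 0" "i \<in> ZN N" "p \<in> ZN N" "q \<in> ZN N"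
  shows "mul N (X N i i p) (X N i i q) = (if p = q then X N i i p else (\<lambda>_. 0))"
  using assms by (simp add: mul_Xf ZN_mod)

lemma mulXXp: assumes "N > 0" "i \<in> ZN N" "p \<in> ZN N" "q \<in> ZN N"
  shows "mul N (X N i i p) (X N i i q) t = (if p = q then X N i i p t else 0)"
  using assms by (simp add: mul_X ZN_mod)

lemma Santi_X: assumes "i \<in> ZN N" "s \<in> ZN N"
  shows "Santi N i (X N i i s) = X N i i (- s)"
proof
  fix t
  have "Santi N i (X N i i s) t = (\<Sum>p\<in>ZN N. if p = s then X N i i (- p) t else 0)"
    unfolding Santi_def using assms by (intro sum.cong refl) (simp add: X_pt)
  then show "Santi N i (X N i i s) t = X N i i (- s) t" using assms by simp
qed

lemma neg_mod_iff: assumes "p \<in> ZN N" "al \<in> ZN N"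
  shows "(- p) mod int N = al \<longleftrightarrow> p = (- al) mod int N"
proof
  assume "(- p) mod int N = al"
  then have "al mod int N = (- p) mod int N" using assms by (simp add: ZN_mod)
  then have "(- al) mod int N = p mod int N" by (rule neg_mod_eq)
  then show "p = (- al) mod int N" using assms by (simp add: ZN_mod)
next
  assume "p = (- al) mod int N"
  then show "(- p) mod int N = al" using assms by (simp add: mod_minus_eq ZN_mod)
qed

lemma Santi_hs: assumes "N > 0" "i \<in> ZN N"
  shows "Santi N i (hs N i c) = hs N i (\<lambda>p. c ((- p) mod int N))"
proof
  fix t
  show "Santi N i (hs N i c) t = hs N i (\<lambda>p. c ((- p) mod int N)) t"
  proof (cases "inB N i t")
    case True
    then obtain al where t: "t = (i, i, al)" "al \<in> ZN N" by (cases t) (auto simp: inB_def)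
    have "Santi N i (hs N i c) t = (\<Sum>p\<in>ZN N. if p = (- al) mod int N then c p else 0)"
      unfolding Santi_def
    proof (intro sum.cong refl)
      fix p assume p: "p \<in> ZN N"
      have "X N i i (- p) t = (if p = (- al) mod int N then 1 else 0)"
        using t neg_mod_iff[OF p t(2)] unfolding X_def ZN_mod[OF assms(2)] by auto
      then show "hs N i c (i, i, p) * X N i i (- p) t = (if p = (- al) mod int N then c p else 0)"
        using assms p by (simp add: hs_pt inB_def)
    qed
    also have "\<dots> = c ((- al) mod int N)" using assms by (simp add: mod_ZN)
    finally show ?thesis using assms t by (simp add: hs_pt inB_def)
  next
    case False
    have "Santi N i (hs N i c) t = 0"
      unfolding Santi_def using assms False by (intro sum.neutral) (auto simp: X_def inB_def mod_ZN ZN_mod)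
    then show ?thesis using False assms by (simp add: hs_pt)
  qed
qed

lemma iota_hs: assumes "i \<in> ZN N" "j \<in> ZN N"
  shows "iota N i j (hs N i c) = hs N j c"
  unfolding iota_def hs_def using assms
  by (intro ext sum.cong refl) (simp add: hs_pt[OF assms(1), unfolded hs_def] inB_def)

lemma Bas_sum: "(\<Sum>u\<in>Bas N. f u) = (\<Sum>a\<in>ZN N. \<Sum>b\<in>ZN N. \<Sum>c\<in>ZN N. f (a, b, c))"
  by (simp add: Bas_def sum.cartesian_product)

lemma act_one_X: assumes "N > 0" "a \<in> ZN N" "b \<in> ZN N" "c \<in> ZN N"
  shows "act N (one N) (X N a b c) t = (if a = b then X N a a c t else 0)"
proof -
  have "act N (one N) (X N a b c) t = (\<Sum>k\<in>ZN N. \<Sum>p\<in>ZN N. act N (X N k k p) (X N a b c) t)"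
    by (subst one_sum, simp only: act_lin1) simp
  also have "\<dots> = (\<Sum>k\<in>ZN N. \<Sum>p\<in>ZN N. if p = 0 then if k = a then (if a = b then X N a a c t else 0) else 0 else 0)"
    using assms by (intro sum.cong refl) (auto simp: act_X ZN_mod)
  also have "\<dots> = (if a = b then X N a a c t else 0)"
    using assms by (simp add: ZN_def)
  finally show ?thesis .
qed

lemma Hc_expand: assumes "x \<in> Hc N" shows "x = (\<lambda>t. \<Sum>w\<in>Bas N. x w * Xb N w t)"
proof
  fix t
  have "(\<Sum>w\<in>Bas N. x w * Xb N w t) = (\<Sum>w\<in>Bas N. if w = t then x t else 0)"
    by (intro sum.cong refl) (auto simp: Xb_def X_def Bas_def ZN_mod)
  also have "\<dots> = x t"
  proof (cases "t \<in> Bas N")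
    case False
    then have "x t = 0" using assms unfolding Hc_def by blast
    then show ?thesis using False by simp
  qed simp
  finally show "x t = (\<Sum>w\<in>Bas N. x w * Xb N w t)" by simp
qed

lemma act_one: assumes "N > 0" "x \<in> Hc N"
  shows "act N (one N) x = (\<lambda>t. \<Sum>i\<in>ZN N. hs N i (\<lambda>p. x (i, i, p)) t)"
proof
  fix t
  have "act N (one N) x t = (\<Sum>w\<in>Bas N. x w * act N (one N) (Xb N w) t)"
    by (subst Hc_expand[OF assms(2)], rule act_lin2)
  also have "\<dots> = (\<Sum>a\<in>ZN N. \<Sum>b\<in>ZN N. \<Sum>c\<in>ZN N. if a = b then x (a, a, c) * X N a a c t else 0)"
    unfolding Bas_sum using assms(1) by (intro sum.cong refl) (auto simp: Xb_def act_one_X)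
  also have "\<dots> = (\<Sum>a\<in>ZN N. \<Sum>b\<in>ZN N. if b = a then (\<Sum>c\<in>ZN N. x (a, a, c) * X N a a c t) else 0)"
    by (intro sum.cong refl) auto
  also have "\<dots> = (\<Sum>i\<in>ZN N. hs N i (\<lambda>p. x (i, i, p)) t)"
    by (simp add: hs_def)
  finally show "act N (one N) x t = (\<Sum>i\<in>ZN N. hs N i (\<lambda>p. x (i, i, p)) t)" .
qed

lemma sum_hs_pt: assumes "i \<in> ZN N" "p \<in> ZN N"
  shows "(\<Sum>j\<in>ZN N. hs N j (c j) (i, i, p)) = c i p"
proof -
  have "(\<Sum>j\<in>ZN N. hs N j (c j) (i, i, p)) = (\<Sum>j\<in>ZN N. if j = i then c i p else 0)"
    using assms by (intro sum.cong refl) (auto simp: hs_pt inB_def)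
  then show ?thesis using assms by simp
qed

lemma sum_nat_ZN: "(\<Sum>k<N. f (int k)) = (\<Sum>p\<in>ZN N. f p)"
proof -
  have "ZN N = int ` {..<N}" unfolding ZN_def by (simp add: image_atLeastZeroLessThan_int)
  then show ?thesis by (simp add: sum.reindex)
qed

lemma hs_add: "(\<lambda>t. hs N i c t + hs N i d t) = hs N i (\<lambda>p. c p + d p)"
  by (simp add: hs_def sum.distrib algebra_simps)
lemma hs_smul: "(\<lambda>t. k * hs N i c t) = hs N i (\<lambda>p. k * c p)"
  by (simp add: hs_def sum_distrib_left mult.assoc)
lemma hs_zero: "(\<lambda>_. 0) = hs N i (\<lambda>_. 0)"
  by (simp add: hs_def)

lemma hs_in[simp]: "hs N i c \<in> Hi N i" by (auto simp: Hi_hs)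

lemma ball_Hi: "(\<forall>x\<in>Hi N i. P x) \<longleftrightarrow> (\<forall>c. P (hs N i c))"
  by (metis hs_in Hi_hs)

lemma epst_Xf: assumes "N > 0" "i \<in> ZN N" "s \<in> ZN N"
  shows "epst N (X N i i s) = (if s = 0 then onei N i else (\<lambda>_. 0))"
  using epst_X[OF assms] by auto

lemma mul_onei_X: assumes "N > 0" "i \<in> ZN N" "q \<in> ZN N"
  shows "mul N (onei N i) (X N i i q) = X N i i q" "mul N (X N i i q) (onei N i) = X N i i q"
  using assms by (simp_all add: onei_hs X_hs mul_hs)

lemma sumXneg: assumes "N > 0" "i \<in> ZN N"
  shows "(\<Sum>w\<in>ZN N. X N i i (- w) t) = onei N i t"
proof -
  have "Santi N i (onei N i) = onei N i"
    using Santi_hs[OF assms, of "\<lambda>_. 1"] by (simp add: onei_hs)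
  then have "Santi N i (onei N i) t = onei N i t" by simp
  moreover have "Santi N i (onei N i) t = (\<Sum>w\<in>ZN N. X N i i (- w) t)"
    unfolding Santi_def using assms by (intro sum.cong refl) (simp add: onei_hs hs_pt inB_def)
  ultimately show ?thesis by simp
qed

lemma modneg0: "((w::int) + (- w) mod n) mod n = 0"
  by (simp add: mod_add_right_eq)

lemma conv_hs: assumes "N > 0" "i \<in> ZN N"
  shows "conv N m f g (udelta N \<omega> (hs N i c)) t = (\<Sum>w\<in>ZN N. \<Sum>q\<in>ZN N. c ((w + q) mod int N) * m (f (X N i i w)) (g (X N i i q)) t)"
proof -
  have "conv N m f g (udelta N \<omega> (hs N i c)) t = (\<Sum>u\<in>Bas N. \<Sum>v\<in>Bas N. (if inB N i u \<and> inB N i v then c ((th u + th v) mod int N) else 0) * m (f (Xb N u)) (g (Xb N v)) t)"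
    unfolding conv_def by (simp add: udelta_hs assms)
  then show ?thesis by (simp add: BS2 assms Xb_iip)
qed

lemma times_if1[simp]: "(x::complex) * (if P then 1 else 0) = (if P then x else 0)" by simp
lemma times_if2[simp]: "(if P then 1 else 0) * (x::complex) = (if P then x else 0)" by simp

lemma X_notinB: assumes "i \<in> ZN N" "q \<in> ZN N" "\<not> inB N i t" shows "X N i i q t = 0"
  using assms by (auto simp: X_pt inB_def)

lemma X_inB: assumes "i \<in> ZN N" "q \<in> ZN N" "al \<in> ZN N" shows "X N i i q (i, i, al) = (if q = al then 1 else 0)"
  using assms by (auto simp: X_pt)

lemma lin_l_hs: assumes "N > 0" "i \<in> ZN N"
  shows "lin_l N (udelta N \<omega>) (udelta N \<omega> (hs N i c)) a b d = (if inB N i a \<and> inB N i b \<and> inB N i d then c ((th a + th b + th d) mod int N) else 0)"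
proof -
  have "lin_l N (udelta N \<omega>) (udelta N \<omega> (hs N i c)) a b d = (\<Sum>w\<in>ZN N. \<Sum>q\<in>ZN N. c ((w + q) mod int N) * (udelta N \<omega> (X N i i w) a b * X N i i q d))"
    unfolding lin_l_def udelta_hs[OF assms] mult.assoc BS2[OF assms(2)] Xb_iip by (simp only: snd_conv)
  also have "\<dots> = (if inB N i a \<and> inB N i b \<and> inB N i d then c ((th a + th b + th d) mod int N) else 0)"
  proof (cases "inB N i a \<and> inB N i b \<and> inB N i d")
    case True
    then obtain al be ga where abd: "a = (i, i, al)" "b = (i, i, be)" "d = (i, i, ga)" "al \<in> ZN N" "be \<in> ZN N" "ga \<in> ZN N"
      by (cases a, cases b, cases d) (auto simp: inB_def)
    have "(\<Sum>w\<in>ZN N. \<Sum>q\<in>ZN N. c ((w + q) mod int N) * (udelta N \<omega> (X N i i w) a b * X N i i q d))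
       = (\<Sum>w\<in>ZN N. if w = (al + be) mod int N then (\<Sum>q\<in>ZN N. if q = ga then c ((w + q) mod int N) else 0) else 0)"
      using assms abd by (intro sum.cong refl) (auto simp: udelta_Xpt X_inB inB_def)
    also have "\<dots> = c (((al + be) mod int N + ga) mod int N)" using assms abd by (simp add: mod_ZN)
    also have "\<dots> = c ((al + be + ga) mod int N)" by (simp add: mod_add_left_eq)
    finally show ?thesis using True abd by simp
  next
    case False
    have "(\<Sum>w\<in>ZN N. \<Sum>q\<in>ZN N. c ((w + q) mod int N) * (udelta N \<omega> (X N i i w) a b * X N i i q d)) = 0"
      using assms False by (intro sum.neutral ballI) (auto simp: udelta_Xpt X_notinB)
    then show ?thesis using False by auto
  qed
  finally show ?thesis .
qed

lemma lin_r_hs: assumes "N > 0" "i \<in> ZN N"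
  shows "lin_r N (udelta N \<omega>) (udelta N \<omega> (hs N i c)) a b d = (if inB N i a \<and> inB N i b \<and> inB N i d then c ((th a + th b + th d) mod int N) else 0)"
proof -
  have "lin_r N (udelta N \<omega>) (udelta N \<omega> (hs N i c)) a b d = (\<Sum>w\<in>ZN N. \<Sum>q\<in>ZN N. c ((w + q) mod int N) * (X N i i w a * udelta N \<omega> (X N i i q) b d))"
    unfolding lin_r_def udelta_hs[OF assms] mult.assoc BS2[OF assms(2)] Xb_iip by (simp only: snd_conv)
  also have "\<dots> = (if inB N i a \<and> inB N i b \<and> inB N i d then c ((th a + th b + th d) mod int N) else 0)"
  proof (cases "inB N i a \<and> inB N i b \<and> inB N i d")
    case True
    then obtain al be ga where abd: "a = (i, i, al)" "b = (i, i, be)" "d = (i, i, ga)" "al \<in> ZN N" "be \<in> ZN N" "ga \<in> ZN N"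
      by (cases a, cases b, cases d) (auto simp: inB_def)
    have "(\<Sum>w\<in>ZN N. \<Sum>q\<in>ZN N. c ((w + q) mod int N) * (X N i i w a * udelta N \<omega> (X N i i q) b d))
       = (\<Sum>w\<in>ZN N. if w = al then (\<Sum>q\<in>ZN N. if q = (be + ga) mod int N then c ((w + q) mod int N) else 0) else 0)"
      using assms abd by (intro sum.cong refl) (auto simp: udelta_Xpt X_inB inB_def)
    also have "\<dots> = c ((al + (be + ga) mod int N) mod int N)" using assms abd by (simp add: mod_ZN)
    also have "\<dots> = c ((al + be + ga) mod int N)" by (simp add: mod_add_right_eq add.assoc)
    finally show ?thesis using True abd by simp
  next
    case False
    have "(\<Sum>w\<in>ZN N. \<Sum>q\<in>ZN N. c ((w + q) mod int N) * (X N i i w a * udelta N \<omega> (X N i i q) b d)) = 0"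
      using assms False by (intro sum.neutral ballI) (auto simp: udelta_Xpt X_notinB)
    then show ?thesis using False by auto
  qed
  finally show ?thesis .
qed

lemma mul2_hs: assumes "N > 0" "i \<in> ZN N"
  shows "mul2 N (mul N) (udelta N \<omega> (hs N i c)) (udelta N \<omega> (hs N i d)) a b
     = (if inB N i a \<and> inB N i b then c ((th a + th b) mod int N) * d ((th a + th b) mod int N) else 0)"
proof -
  have "mul2 N (mul N) (udelta N \<omega> (hs N i c)) (udelta N \<omega> (hs N i d)) a b
    = (\<Sum>u\<in>Bas N. \<Sum>v\<in>Bas N. udelta N \<omega> (hs N i c) u v * (\<Sum>w\<in>Bas N. \<Sum>z\<in>Bas N. udelta N \<omega> (hs N i d) w z * (mul N (Xb N u) (Xb N w) a * mul N (Xb N v) (Xb N z) b)))"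
    unfolding mul2_def by (simp add: sum_distrib_left mult.assoc)
  also have "\<dots> = (\<Sum>w1\<in>ZN N. \<Sum>q1\<in>ZN N. c ((w1 + q1) mod int N) * (\<Sum>w2\<in>ZN N. \<Sum>q2\<in>ZN N. d ((w2 + q2) mod int N) * (mul N (X N i i w1) (X N i i w2) a * mul N (X N i i q1) (X N i i q2) b)))"
    unfolding udelta_hs[OF assms] BS2[OF assms(2)] Xb_iip by (simp only: snd_conv)
  also have "\<dots> = (if inB N i a \<and> inB N i b then c ((th a + th b) mod int N) * d ((th a + th b) mod int N) else 0)"
  proof (cases "inB N i a \<and> inB N i b")
    case True
    then obtain al be where ab: "a = (i, i, al)" "b = (i, i, be)" "al \<in> ZN N" "be \<in> ZN N"
      by (cases a, cases b) (auto simp: inB_def)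
    have "(\<Sum>w1\<in>ZN N. \<Sum>q1\<in>ZN N. c ((w1 + q1) mod int N) * (\<Sum>w2\<in>ZN N. \<Sum>q2\<in>ZN N. d ((w2 + q2) mod int N) * (mul N (X N i i w1) (X N i i w2) a * mul N (X N i i q1) (X N i i q2) b)))
      = (\<Sum>w1\<in>ZN N. if w1 = al then (\<Sum>q1\<in>ZN N. if q1 = be then c ((w1 + q1) mod int N) * (\<Sum>w2\<in>ZN N. if w2 = al then (\<Sum>q2\<in>ZN N. if q2 = be then d ((w2 + q2) mod int N) else 0) else 0) else 0) else 0)"
    proof -
      have key: "mul N (X N i i w1) (X N i i w2) (i, i, al) * mul N (X N i i q1) (X N i i q2) (i, i, be)
         = (if q2 = be then if w2 = al then if q1 = be then if w1 = al then 1 else 0 else 0 else 0 else 0)"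
        if "w1 \<in> ZN N" "q1 \<in> ZN N" "w2 \<in> ZN N" "q2 \<in> ZN N" for w1 q1 w2 q2
        using assms ab that by (simp add: mulXXp X_inB)
      have m0: "(x::complex) * (if P then y else 0) = (if P then x * y else 0)" for x y P by simp
      show ?thesis using ab by (simp add: key m0 cong: sum.cong_simp)
    qed
    then show ?thesis using ab True by simp
  next
    case False
    have "(\<Sum>w1\<in>ZN N. \<Sum>q1\<in>ZN N. c ((w1 + q1) mod int N) * (\<Sum>w2\<in>ZN N. \<Sum>q2\<in>ZN N. d ((w2 + q2) mod int N) * (mul N (X N i i w1) (X N i i w2) a * mul N (X N i i q1) (X N i i q2) b))) = 0"
    proof -
      have key: "mul N (X N i i w1) (X N i i w2) a * mul N (X N i i q1) (X N i i q2) b = 0"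
        if "w1 \<in> ZN N" "q1 \<in> ZN N" "w2 \<in> ZN N" "q2 \<in> ZN N" for w1 q1 w2 q2
        using assms False that by (auto simp: mulXXp X_notinB)
      show ?thesis by (simp add: key cong: sum.cong_simp)
    qed
    then show ?thesis using False by auto
  qed
  finally show ?thesis .
qed

lemma HO_alg: assumes "N > 0" "i \<in> ZN N"
  shows "is_subspace (Hi N i) \<and> onei N i \<in> Hi N i
   \<and> (\<forall>x\<in>Hi N i. \<forall>y\<in>Hi N i. mul N x y \<in> Hi N i)
   \<and> (\<forall>z\<in>Hi N i. lin_on (Hi N i) (\<lambda>x. mul N x z) \<and> lin_on (Hi N i) (\<lambda>x. mul N z x))
   \<and> (\<forall>x\<in>Hi N i. \<forall>y\<in>Hi N i. \<forall>z\<in>Hi N i. mul N (mul N x y) z = mul N x (mul N y z))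
   \<and> (\<forall>x\<in>Hi N i. mul N (onei N i) x = x \<and> mul N x (onei N i) = x)"
proof (intro conjI)
  have z: "(\<lambda>_. 0) \<in> Hi N i" using hs_in[of N i "\<lambda>_. 0"] by (simp add: hs_def)
  show "is_subspace (Hi N i)"
    unfolding is_subspace_def ball_Hi using z by (simp add: hs_add hs_smul)
  show "onei N i \<in> Hi N i" by (simp add: onei_hs)
  show "\<forall>x\<in>Hi N i. \<forall>y\<in>Hi N i. mul N x y \<in> Hi N i" unfolding ball_Hi by (simp add: mul_hs assms)
  show "\<forall>z\<in>Hi N i. lin_on (Hi N i) (\<lambda>x. mul N x z) \<and> lin_on (Hi N i) (\<lambda>x. mul N z x)"
    unfolding ball_Hi lin_on_def by (simp add: hs_add hs_smul mul_hs assms algebra_simps)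
  show "\<forall>x\<in>Hi N i. \<forall>y\<in>Hi N i. \<forall>z\<in>Hi N i. mul N (mul N x y) z = mul N x (mul N y z)"
    unfolding ball_Hi by (simp add: mul_hs assms mult.assoc)
  show "\<forall>x\<in>Hi N i. mul N (onei N i) x = x \<and> mul N x (onei N i) = x"
    unfolding ball_Hi by (simp add: mul_hs onei_hs assms)
qed

lemma HO_coalg: assumes "N > 0" "i \<in> ZN N"
  shows "lin_on2 (Hi N i) (udelta N \<omega>) \<and> (\<forall>x\<in>Hi N i. udelta N \<omega> x \<in> Tens2 (Hi N i))
   \<and> (\<forall>x\<in>Hi N i. lin_l N (udelta N \<omega>) (udelta N \<omega> x) = lin_r N (udelta N \<omega>) (udelta N \<omega> x))"
proof (intro conjI)
  show "lin_on2 (Hi N i) (udelta N \<omega>)"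
    unfolding lin_on2_def ball_Hi by (simp add: hs_add hs_smul udelta_hs assms fun_eq_iff)
  show "\<forall>x\<in>Hi N i. lin_l N (udelta N \<omega>) (udelta N \<omega> x) = lin_r N (udelta N \<omega>) (udelta N \<omega> x)"
    unfolding ball_Hi by (simp add: lin_l_hs lin_r_hs assms fun_eq_iff)
  show "\<forall>x\<in>Hi N i. udelta N \<omega> x \<in> Tens2 (Hi N i)"
    unfolding ball_Hi
  proof
    fix c
    let ?f = "\<lambda>k::nat. X N i i (int k)"
    let ?g = "\<lambda>k::nat. hs N i (\<lambda>q. c ((int k + q) mod int N))"
    have mem: "\<forall>k<N. ?f k \<in> Hi N i \<and> ?g k \<in> Hi N i"
    proof (intro allI impI conjI)
      fix k assume "k < N"
      then have "int k \<in> ZN N" by (simp add: ZN_def)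
      then show "?f k \<in> Hi N i" using assms by (simp add: X_hs)
    qed simp
    have eq: "udelta N \<omega> (hs N i c) = (\<lambda>a b. \<Sum>k<N. tens (?f k) (?g k) a b)"
    proof (intro ext)
      fix a b
      have "(\<Sum>k<N. tens (?f k) (?g k) a b) = (\<Sum>w\<in>ZN N. X N i i w a * hs N i (\<lambda>q. c ((w + q) mod int N)) b)"
        unfolding tens_def by (rule sum_nat_ZN)
      also have "\<dots> = udelta N \<omega> (hs N i c) a b"
        using assms by (simp add: XZ udelta_hs hs_pt)
      finally show "udelta N \<omega> (hs N i c) a b = (\<Sum>k<N. tens (?f k) (?g k) a b)" by simp
    qed
    show "udelta N \<omega> (hs N i c) \<in> Tens2 (Hi N i)"
      unfolding Tens2_def mem_Collect_eq
      by (rule exI[of _ N], rule exI[of _ ?f], rule exI[of _ ?g]) (use eq mem in simp)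
  qed
qed

lemma counit_l: assumes "N > 0" "i \<in> ZN N"
  shows "conv N (mul N) (epst N) id (udelta N \<omega> (hs N i c)) = hs N i c"
proof
  fix t
  have "conv N (mul N) (epst N) id (udelta N \<omega> (hs N i c)) t = (\<Sum>w\<in>ZN N. if w = 0 then (\<Sum>q\<in>ZN N. c q * X N i i q t) else 0)"
    unfolding conv_hs[OF assms] using assms
    by (intro sum.cong refl) (auto simp: epst_Xf mul_onei_X ZN_mod intro!: sum.cong)
  also have "\<dots> = hs N i c t" using assms by (simp add: hs_def ZN_def)
  finally show "conv N (mul N) (epst N) id (udelta N \<omega> (hs N i c)) t = hs N i c t" .
qed

lemma counit_r: assumes "N > 0" "i \<in> ZN N"
  shows "conv N (mul N) id (epst N) (udelta N \<omega> (hs N i c)) = hs N i c"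
proof
  fix t
  have "conv N (mul N) id (epst N) (udelta N \<omega> (hs N i c)) t = (\<Sum>w\<in>ZN N. \<Sum>q\<in>ZN N. if q = 0 then c w * X N i i w t else 0)"
    unfolding conv_hs[OF assms] using assms
    by (intro sum.cong refl) (auto simp: epst_Xf mul_onei_X ZN_mod)
  also have "\<dots> = hs N i c t" using assms by (simp add: hs_def ZN_def)
  finally show "conv N (mul N) id (epst N) (udelta N \<omega> (hs N i c)) t = hs N i c t" .
qed

lemma anti_l: assumes "N > 0" "i \<in> ZN N"
  shows "conv N (mul N) (Santi N i) id (udelta N \<omega> (hs N i c)) = epst N (hs N i c)"
proof
  fix t
  have "conv N (mul N) (Santi N i) id (udelta N \<omega> (hs N i c)) t = (\<Sum>w\<in>ZN N. \<Sum>q\<in>ZN N. if q = (- w) mod int N then c ((w + q) mod int N) * X N i i (- w) t else 0)"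
    unfolding conv_hs[OF assms] using assms
    by (intro sum.cong refl) (auto simp: Santi_X mul_X ZN_mod)
  also have "\<dots> = (\<Sum>w\<in>ZN N. c 0 * X N i i (- w) t)"
    using assms by (intro sum.cong refl) (simp add: mod_ZN modneg0)
  also have "\<dots> = c 0 * onei N i t" using assms by (simp add: sum_distrib_left[symmetric] sumXneg)
  also have "\<dots> = epst N (hs N i c) t" unfolding epst_hs[OF assms] by (simp add: onei_def hs_def sum_distrib_left)
  finally show "conv N (mul N) (Santi N i) id (udelta N \<omega> (hs N i c)) t = epst N (hs N i c) t" .
qed

lemma anti_r: assumes "N > 0" "i \<in> ZN N"
  shows "conv N (mul N) id (Santi N i) (udelta N \<omega> (hs N i c)) = epst N (hs N i c)"
proof
  fix t
  have "conv N (mul N) id (Santi N i) (udelta N \<omega> (hs N i c)) t = (\<Sum>w\<in>ZN N. \<Sum>q\<in>ZN N. if q = (- w) mod int N then c ((w + q) mod int N) * X N i i w t else 0)"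
    unfolding conv_hs[OF assms]
  proof (intro sum.cong refl)
    fix w q assume w: "w \<in> ZN N" and q: "q \<in> ZN N"
    have "(w = (- q) mod int N) \<longleftrightarrow> (q = (- w) mod int N)" using neg_mod_iff[OF q w] by auto
    then show "c ((w + q) mod int N) * mul N (id (X N i i w)) (Santi N i (X N i i q)) t
      = (if q = (- w) mod int N then c ((w + q) mod int N) * X N i i w t else 0)"
      using assms w q by (auto simp: Santi_X mul_X ZN_mod)
  qed
  also have "\<dots> = (\<Sum>w\<in>ZN N. c 0 * X N i i w t)"
    using assms by (intro sum.cong refl) (simp add: mod_ZN modneg0)
  also have "\<dots> = c 0 * onei N i t" using assms by (simp add: sum_distrib_left[symmetric] onei_def)
  also have "\<dots> = epst N (hs N i c) t" unfolding epst_hs[OF assms] by (simp add: onei_def hs_def sum_distrib_left)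
  finally show "conv N (mul N) id (Santi N i) (udelta N \<omega> (hs N i c)) t = epst N (hs N i c) t" .
qed

lemma hopf_Hi: assumes "N > 0" "i \<in> ZN N"
  shows "hopf_over N (Hi N i) (onei N i) (mul N) (udelta N \<omega>) (epst N) (Santi N i)"
  unfolding hopf_over_def
proof (intro conjI)
  note A = HO_alg[OF assms] and C = HO_coalg[OF assms, of \<omega>]
  show "is_subspace (Hi N i)" "onei N i \<in> Hi N i"
     "\<forall>x\<in>Hi N i. \<forall>y\<in>Hi N i. mul N x y \<in> Hi N i"
     "\<forall>z\<in>Hi N i. lin_on (Hi N i) (\<lambda>x. mul N x z) \<and> lin_on (Hi N i) (\<lambda>x. mul N z x)"
     "\<forall>x\<in>Hi N i. \<forall>y\<in>Hi N i. \<forall>z\<in>Hi N i. mul N (mul N x y) z = mul N x (mul N y z)"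
     "\<forall>x\<in>Hi N i. mul N (onei N i) x = x \<and> mul N x (onei N i) = x"
    using A by auto
  show "lin_on2 (Hi N i) (udelta N \<omega>)" "\<forall>x\<in>Hi N i. udelta N \<omega> x \<in> Tens2 (Hi N i)"
     "\<forall>x\<in>Hi N i. lin_l N (udelta N \<omega>) (udelta N \<omega> x) = lin_r N (udelta N \<omega>) (udelta N \<omega> x)"
    using C by auto
  show "lin_on (Hi N i) (epst N)"
    unfolding lin_on_def ball_Hi by (simp add: epst_hs assms hs_add hs_smul)
  show "\<forall>x\<in>Hi N i. \<exists>c. epst N x = (\<lambda>t. c * onei N i t)"
    unfolding ball_Hi onei_hs by (simp add: epst_hs assms hs_smul) blast
  show "\<forall>x\<in>Hi N i. conv N (mul N) (epst N) id (udelta N \<omega> x) = x \<and> conv N (mul N) id (epst N) (udelta N \<omega> x) = x"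
    unfolding ball_Hi by (simp add: counit_l counit_r assms)
  show "udelta N \<omega> (onei N i) = tens (onei N i) (onei N i)"
    unfolding onei_hs by (simp add: fun_eq_iff udelta_hs assms tens_def hs_pt)
  show "\<forall>x\<in>Hi N i. \<forall>y\<in>Hi N i. udelta N \<omega> (mul N x y) = mul2 N (mul N) (udelta N \<omega> x) (udelta N \<omega> y)"
    unfolding ball_Hi by (simp add: fun_eq_iff udelta_hs mul2_hs mul_hs assms)
  show "epst N (onei N i) = onei N i" unfolding onei_hs by (simp add: epst_hs assms)
  show "\<forall>x\<in>Hi N i. \<forall>y\<in>Hi N i. epst N (mul N x y) = mul N (epst N x) (epst N y)"
    unfolding ball_Hi by (simp add: epst_hs mul_hs assms)
  show "lin_on (Hi N i) (Santi N i)"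
    unfolding lin_on_def ball_Hi by (simp add: Santi_hs assms hs_add hs_smul)
  show "\<forall>x\<in>Hi N i. Santi N i x \<in> Hi N i"
    unfolding ball_Hi by (simp add: Santi_hs assms)
  show "\<forall>x\<in>Hi N i. conv N (mul N) (Santi N i) id (udelta N \<omega> x) = epst N x \<and> conv N (mul N) id (Santi N i) (udelta N \<omega> x) = epst N x"
    unfolding ball_Hi by (simp add: anti_l anti_r assms)
qed

lemma iota_X: assumes "i \<in> ZN N" "j \<in> ZN N" "w \<in> ZN N"
  shows "iota N i j (X N i i w) = X N j j w"
  using assms by (simp add: X_hs iota_hs)

lemma hopf_iota: assumes "N > 0" "i \<in> ZN N" "j \<in> ZN N"
  shows "hopf_iso N (Hi N i) (Hi N j) (onei N i) (onei N j) (mul N) (udelta N \<omega>)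
            (epst N) (epst N) (Santi N i) (Santi N j) (iota N i j)"
  unfolding hopf_iso_def
proof (intro conjI)
  show "bij_betw (iota N i j) (Hi N i) (Hi N j)"
    unfolding bij_betw_def
  proof
    show "inj_on (iota N i j) (Hi N i)"
    proof (rule inj_onI)
      fix x y assume "x \<in> Hi N i" "y \<in> Hi N i" "iota N i j x = iota N i j y"
      then obtain c d where "x = hs N i c" "y = hs N i d" "hs N j c = hs N j d"
        using assms by (auto simp: Hi_hs iota_hs)
      then show "x = y" using assms by (simp add: hs_eq_iff)
    qed
    show "iota N i j ` Hi N i = Hi N j"
    proof
      show "iota N i j ` Hi N i \<subseteq> Hi N j"
      proof
        fix y assume "y \<in> iota N i j ` Hi N i"
        then obtain c where "y = iota N i j (hs N i c)" by (auto simp: Hi_hs)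
        then show "y \<in> Hi N j" using assms by (simp add: iota_hs)
      qed
      show "Hi N j \<subseteq> iota N i j ` Hi N i"
      proof
        fix y assume "y \<in> Hi N j"
        then obtain c where "y = hs N j c" by (auto simp: Hi_hs)
        then have "y = iota N i j (hs N i c)" using assms by (simp add: iota_hs)
        then show "y \<in> iota N i j ` Hi N i" by simp
      qed
    qed
  qed
  show "lin_on (Hi N i) (iota N i j)"
    unfolding lin_on_def ball_Hi by (simp add: iota_hs assms hs_add hs_smul)
  show "iota N i j (onei N i) = onei N j" unfolding onei_hs by (simp add: iota_hs assms)
  show "\<forall>x\<in>Hi N i. \<forall>y\<in>Hi N i. iota N i j (mul N x y) = mul N (iota N i j x) (iota N i j y)"
    unfolding ball_Hi by (simp add: iota_hs mul_hs assms)
  show "\<forall>x\<in>Hi N i. epst N (iota N i j x) = iota N i j (epst N x)"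
    unfolding ball_Hi by (simp add: iota_hs epst_hs assms)
  show "\<forall>x\<in>Hi N i. Santi N j (iota N i j x) = iota N i j (Santi N i x)"
    unfolding ball_Hi by (simp add: iota_hs Santi_hs assms)
  show "\<forall>x\<in>Hi N i. udelta N \<omega> (iota N i j x) = map2 N (iota N i j) (iota N i j) (udelta N \<omega> x)"
    unfolding ball_Hi
  proof (intro allI ext)
    fix c a b
    have "map2 N (iota N i j) (iota N i j) (udelta N \<omega> (hs N i c)) a b
      = (\<Sum>w\<in>ZN N. \<Sum>q\<in>ZN N. c ((w + q) mod int N) * (iota N i j (X N i i w) a * iota N i j (X N i i q) b))"
      unfolding map2_def udelta_hs[OF assms(1,2)] mult.assoc BS2[OF assms(2)] Xb_iip by (simp only: snd_conv)
    also have "\<dots> = (\<Sum>w\<in>ZN N. X N j j w a * (\<Sum>q\<in>ZN N. X N j j q b * c ((w + q) mod int N)))"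
      using assms by (intro sum.cong refl) (simp add: iota_X sum_distrib_left mult.commute mult.left_commute)
    also have "\<dots> = udelta N \<omega> (iota N i j (hs N i c)) a b"
      using assms by (simp add: XZ iota_hs udelta_hs)
    finally show "udelta N \<omega> (iota N i j (hs N i c)) a b = map2 N (iota N i j) (iota N i j) (udelta N \<omega> (hs N i c)) a b" by simp
  qed
qed

lemma Hi_choice: assumes "\<forall>i\<in>ZN N. xs i \<in> Hi N i"
  obtains C where "\<forall>i\<in>ZN N. xs i = hs N i (C i)"
proof -
  have "\<forall>i\<in>ZN N. \<exists>c. xs i = hs N i c" using assms by (simp add: Hi_hs)
  then obtain C where "\<forall>i\<in>ZN N. xs i = hs N i (C i)" by metis
  then show ?thesis using that by blast
qed

lemma sum_hs_cong: assumes "\<forall>i\<in>ZN N. xs i = hs N i (C i)"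
  shows "(\<lambda>t. \<Sum>i\<in>ZN N. xs i t) = (\<lambda>t. \<Sum>i\<in>ZN N. hs N i (C i) t)"
  using assms by (auto intro!: sum.cong)

lemma RH_eq: assumes "N > 0"
  shows "RH N = {(\<lambda>t. \<Sum>i\<in>ZN N. xs i t) | xs. \<forall>i\<in>ZN N. xs i \<in> Hi N i}"
proof
  show "RH N \<subseteq> {(\<lambda>t. \<Sum>i\<in>ZN N. xs i t) | xs. \<forall>i\<in>ZN N. xs i \<in> Hi N i}"
  proof
    fix x assume "x \<in> RH N"
    then obtain h where h: "h \<in> Hc N" "x = act N (one N) h" by (auto simp: RH_def)
    then have "x = (\<lambda>t. \<Sum>i\<in>ZN N. hs N i (\<lambda>p. h (i, i, p)) t)" using act_one[OF assms] by simp
    then show "x \<in> {(\<lambda>t. \<Sum>i\<in>ZN N. xs i t) | xs. \<forall>i\<in>ZN N. xs i \<in> Hi N i}" by auto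
  qed
  show "{(\<lambda>t. \<Sum>i\<in>ZN N. xs i t) | xs. \<forall>i\<in>ZN N. xs i \<in> Hi N i} \<subseteq> RH N"
  proof
    fix x assume "x \<in> {(\<lambda>t. \<Sum>i\<in>ZN N. xs i t) | xs. \<forall>i\<in>ZN N. xs i \<in> Hi N i}"
    then obtain xs where xs: "\<forall>i\<in>ZN N. xs i \<in> Hi N i" "x = (\<lambda>t. \<Sum>i\<in>ZN N. xs i t)" by auto
    obtain C where C: "\<forall>i\<in>ZN N. xs i = hs N i (C i)" using Hi_choice[OF xs(1)] by blast
    define h where "h = (\<lambda>t. \<Sum>i\<in>ZN N. hs N i (C i) t)"
    have xh: "x = h" unfolding h_def xs(2) using sum_hs_cong[OF C] .
    have hc: "h \<in> Hc N"
      unfolding Hc_def h_def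
    proof (intro CollectI allI impI sum.neutral ballI)
      fix u i assume u: "u \<notin> Bas N" and i: "i \<in> ZN N"
      have "\<not> inB N i u" using u i by (cases u) (auto simp: inB_def Bas_def)
      then show "hs N i (C i) u = 0" using i by (simp add: hs_pt)
    qed
    have "act N (one N) h = (\<lambda>t. \<Sum>i\<in>ZN N. hs N i (\<lambda>p. h (i, i, p)) t)" by (rule act_one[OF assms hc])
    also have "\<dots> = h"
      unfolding h_def
    proof (intro ext sum.cong refl)
      fix t i assume i: "i \<in> ZN N"
      have "hs N i (\<lambda>p. \<Sum>j\<in>ZN N. hs N j (C j) (i, i, p)) = hs N i (C i)"
        using i by (simp add: hs_eq_iff sum_hs_pt)
      then show "hs N i (\<lambda>p. \<Sum>j\<in>ZN N. hs N j (C j) (i, i, p)) t = hs N i (C i) t" by simp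
    qed
    finally show "x \<in> RH N" using hc xh unfolding RH_def by (metis (mono_tags, lifting) mem_Collect_eq)
  qed
qed

lemma RH_unique: assumes "\<forall>i\<in>ZN N. xs i \<in> Hi N i \<and> ys i \<in> Hi N i"
   and "(\<lambda>t. \<Sum>i\<in>ZN N. xs i t) = (\<lambda>t. \<Sum>i\<in>ZN N. ys i t)"
  shows "\<forall>i\<in>ZN N. xs i = ys i"
proof -
  obtain C where C: "\<forall>i\<in>ZN N. xs i = hs N i (C i)" using Hi_choice[of N xs] assms(1) by blast
  obtain D where D: "\<forall>i\<in>ZN N. ys i = hs N i (D i)" using Hi_choice[of N ys] assms(1) by blast
  have e: "(\<lambda>t. \<Sum>i\<in>ZN N. hs N i (C i) t) = (\<lambda>t. \<Sum>i\<in>ZN N. hs N i (D i) t)"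
    using assms(2) sum_hs_cong[OF C] sum_hs_cong[OF D] by simp
  show ?thesis
  proof
    fix i assume i: "i \<in> ZN N"
    have "\<forall>p\<in>ZN N. C i p = D i p"
    proof
      fix p assume p: "p \<in> ZN N"
      have "(\<Sum>j\<in>ZN N. hs N j (C j) (i, i, p)) = (\<Sum>j\<in>ZN N. hs N j (D j) (i, i, p))"
        using fun_cong[OF e, of "(i, i, p)"] by simp
      then show "C i p = D i p" using i p by (simp add: sum_hs_pt)
    qed
    then show "xs i = ys i" using C D i by (simp add: hs_eq_iff)
  qed
qed


theorem corollary4p5:
  fixes N :: nat and \<omega> :: complex
  assumes "N \<ge> 2" and "primitive_root N \<omega>"
  shows "RH N = {(\<lambda>t. \<Sum>i\<in>ZN N. xs i t) | xs. \<forall>i\<in>ZN N. xs i \<in> Hi N i}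
    \<and> (\<forall>xs ys. (\<forall>i\<in>ZN N. xs i \<in> Hi N i \<and> ys i \<in> Hi N i)
         \<longrightarrow> (\<lambda>t. \<Sum>i\<in>ZN N. xs i t) = (\<lambda>t. \<Sum>i\<in>ZN N. ys i t)
         \<longrightarrow> (\<forall>i\<in>ZN N. xs i = ys i))
    \<and> (\<forall>i\<in>ZN N.
         (\<forall>p\<in>ZN N. \<forall>q\<in>ZN N. mul N (X N i i p) (X N i i q) = (if p = q then X N i i p else (\<lambda>_. 0)))
       \<and> (\<forall>s\<in>ZN N. udelta N \<omega> (X N i i s) =
            (\<lambda>a b. \<Sum>w\<in>ZN N. \<Sum>q\<in>ZN N. if (w + q) mod int N = s then tens (X N i i w) (X N i i q) a b else 0))
       \<and> (\<forall>s\<in>ZN N. epst N (X N i i s) = (\<lambda>t. (if s = 0 then 1 else 0) * onei N i t))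
       \<and> (\<forall>s\<in>ZN N. Santi N i (X N i i s) = X N i i (- s))
       \<and> hopf_over N (Hi N i) (onei N i) (mul N) (udelta N \<omega>) (epst N) (Santi N i))
    \<and> (\<forall>i\<in>ZN N. \<forall>j\<in>ZN N.
         (\<forall>p\<in>ZN N. iota N i j (X N i i p) = X N j j p)
       \<and> hopf_iso N (Hi N i) (Hi N j) (onei N i) (onei N j) (mul N) (udelta N \<omega>)
            (epst N) (epst N) (Santi N i) (Santi N j) (iota N i j))"
proof -
  have N: "N > 0" using assms(1) by simp
  show ?thesis
  proof (intro conjI ballI allI impI)
    show "RH N = {(\<lambda>t. \<Sum>i\<in>ZN N. xs i t) | xs. \<forall>i\<in>ZN N. xs i \<in> Hi N i}" by (rule RH_eq[OF N])
  next
    fix xs ys :: "int \<Rightarrow> hel" and i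
    assume "\<forall>i\<in>ZN N. xs i \<in> Hi N i \<and> ys i \<in> Hi N i"
      "(\<lambda>t. \<Sum>i\<in>ZN N. xs i t) = (\<lambda>t. \<Sum>i\<in>ZN N. ys i t)" "i \<in> ZN N"
    then show "xs i = ys i" using RH_unique by blast
  next
    fix i p q assume "i \<in> ZN N" "p \<in> ZN N" "q \<in> ZN N"
    then show "mul N (X N i i p) (X N i i q) = (if p = q then X N i i p else (\<lambda>_. 0))"
      using N by (rule_tac mulXX) auto
  next
    fix i s assume i: "i \<in> ZN N" and s: "s \<in> ZN N"
    show "udelta N \<omega> (X N i i s) =
            (\<lambda>a b. \<Sum>w\<in>ZN N. \<Sum>q\<in>ZN N. if (w + q) mod int N = s then tens (X N i i w) (X N i i q) a b else 0)"
      using s unfolding tens_def by (intro ext) (simp add: udelta_X[OF N i] ZN_mod)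
  next
    fix i s assume i: "i \<in> ZN N" and s: "s \<in> ZN N"
    show "epst N (X N i i s) = (\<lambda>t. (if s = 0 then 1 else 0) * onei N i t)"
      by (intro ext) (simp add: epst_X[OF N i s])
  next
    fix i s assume i: "i \<in> ZN N" and s: "s \<in> ZN N"
    show "Santi N i (X N i i s) = X N i i (- s)" by (rule Santi_X[OF i s])
  next
    fix i assume i: "i \<in> ZN N"
    show "hopf_over N (Hi N i) (onei N i) (mul N) (udelta N \<omega>) (epst N) (Santi N i)"
      by (rule hopf_Hi[OF N i])
  next
    fix i j p assume "i \<in> ZN N" "j \<in> ZN N" "p \<in> ZN N"
    then show "iota N i j (X N i i p) = X N j j p" by (rule iota_X)
  next
    fix i j assume "i \<in> ZN N" "j \<in> ZN N"
    then show "hopf_iso N (Hi N i) (Hi N j) (onei N i) (onei N j) (mul N) (udelta N \<omega>)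
            (epst N) (epst N) (Santi N i) (Santi N j) (iota N i j)"
      by (rule hopf_iota[OF N])
  qed
qed

end
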